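(* Assume $\eta_a\neq q^{j}\eta_b$ for all $j\in\{-1,0,1\}$ and $1\le a<b\le\mathsf N$. For $\mathbf h,\mathbf h'\in\{0,1\}^{\mathsf N}$ the pairing of the left SOV covector $\langle\mathbf h|$ with the right SOV vector $|\mathbf h'\rangle$ satisfies $\langle\mathbf h|\mathbf h'\rangle=0$ if $\mathbf h\neq\mathbf h'$, and $\langle h_1,\dots,h_{\mathsf N}|h_1,\dots,h_{\mathsf N}\rangle=\prod_{1\le b<a\le\mathsf N}\frac{1}{\eta_aq^{h_b-h_a}/\eta_b-\eta_b/(q^{h_b-h_a}\eta_a)}$. Equivalently, with the change-of-basis matrices $U^{(L)},U^{(R)}$ defined by $\langle\mathbf y_j|=\sum_iU^{(L)}_{j,i}\langle\mathbf x_i|$ and $|\mathbf y_j\rangle=\sum_iU^{(R)}_{i,j}|\mathbf x_i\rangle$, the matrix $U^{(L)}U^{(R)}$ is diagonal with these diagonal entries.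
   Context: Fix $q=e^{\eta}\in\mathbb C$, $q\neq\pm1$, $\mathsf N\ge1$, inhomogeneities $\eta_1,\dots,\eta_{\mathsf N}\in\mathbb C\setminus\{0\}$. $\mathcal R_{\mathsf N}=\bigotimes_{n=1}^{\mathsf N}\mathbb C^2$, $\mathcal L_{\mathsf N}$ its dual; $\langle\cdot|\cdot\rangle$ is the canonical pairing, with $|1,n\rangle,|-1,n\rangle$ the $\sigma^z_n$-eigenbasis and $\langle k,n|k',n\rangle=\delta_{k,k'}$; $\sigma^+=E_{12}$, $\sigma^-=E_{21}$. Lax operator $\mathsf L_{0n}(\lambda)=\begin{pmatrix}x_+(\lambda)+x_-(\lambda)\sigma^z_n & (q-q^{-1})\sigma^-_n\\ (q-q^{-1})\sigma^+_n & x_+(\lambda)-x_-(\lambda)\sigma^z_n\end{pmatrix}$, $x_\pm(\lambda)=\tfrac12(\lambda q-(q\lambda)^{-1}\pm(\lambda-\lambda^{-1}))$; monodromy $\mathsf M_0(\lambda)=\mathsf L_{0\mathsf N}(\lambda/\eta_{\mathsf N})\cdots\mathsf L_{01}(\lambda/\eta_1)=\begin{pmatrix}\mathsf A&\mathsf B\\ \mathsf C&\mathsf D\end{pmatrix}(\lambda)$. $a(\lambda)=-\prod_n(\lambda q/\eta_n-\eta_n/(\lambda q))$, $d(\lambda)=\prod_n(\lambda/\eta_n-\eta_n/\lambda)$. $\langle0|=\bigotimes_n\langle1,n|$, $|0\rangle=\bigotimes_n|1,n\rangle$, $\textsc{n}=\prod_{1\le b<a\le\mathsf N}(\eta_a/\eta_b-\eta_b/\eta_a)^{1/2}$.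 SOV states: $\langle\mathbf h|=\frac1{\textsc n}\langle0|\prod_n(\mathsf C(\eta_n)/d(\eta_n/q))^{h_n}$, $|\mathbf h\rangle=\frac1{\textsc n}\prod_n(\mathsf B(\eta_n)/a(\eta_n))^{h_n}|0\rangle$ for $\mathbf h\in\{0,1\}^{\mathsf N}$. Indexing: $j=\varkappa(\mathbf h)=1+\sum_a2^{a-1}h_a$, $\langle\mathbf y_j|=\langle\mathbf h|$, $|\mathbf y_j\rangle=|\mathbf h\rangle$, $\langle\mathbf x_j|=\bigotimes_n\langle2h_n-1,n|$, $|\mathbf x_j\rangle=\bigotimes_n|2h_n-1,n\rangle$. *)

theory Defs
  imports "HOL-Analysis.Analysis"
begin

text \<open>Quantum space R_N = tensor product of N copies of C^2.  A basis vector
  (sigma^z eigenbasis) is a configuration: a bool list of length N, where entry n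
  is True for |1,n> (spin up, h_n = 1) and False for |-1,n> (h_n = 0).
  Sites are indexed 0..N-1 (paper: 1..N).  Vectors and covectors are coordinate
  functions on configurations; operators are given by their matrix elements
  op x y = <x| op |y>.\<close>

type_synonym qop = "bool list \<Rightarrow> bool list \<Rightarrow> complex"
type_synonym qvec = "bool list \<Rightarrow> complex"

definition confs :: "nat \<Rightarrow> bool list set" where
  "confs N = {x. length x = N}"

definition op_mult :: "nat \<Rightarrow> qop \<Rightarrow> qop \<Rightarrow> qop" where
  "op_mult N A B = (\<lambda>x y. \<Sum>z\<in>confs N. A x z * B z y)"

definition op_add :: "qop \<Rightarrow> qop \<Rightarrow> qop" where
  "op_add A B = (\<lambda>x y. A x y + B x y)"

definition op_zero :: qop where
  "op_zero = (\<lambda>x y. 0)"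

definition op_id :: qop where
  "op_id = (\<lambda>x y. if x = y then 1 else 0)"

definition local_op :: "nat \<Rightarrow> nat \<Rightarrow> (bool \<Rightarrow> bool \<Rightarrow> complex) \<Rightarrow> qop" where
  "local_op N n m = (\<lambda>x y. if (\<forall>k<N. k \<noteq> n \<longrightarrow> x ! k = y ! k) then m (x ! n) (y ! n) else 0)"

definition loc_id :: "bool \<Rightarrow> bool \<Rightarrow> complex" where
  "loc_id a b = (if a = b then 1 else 0)"

definition sigma_z :: "bool \<Rightarrow> bool \<Rightarrow> complex" where
  "sigma_z a b = (if a = b then (if a then 1 else -1) else 0)"

text \<open>sigma^+ = E_12 : <1|sigma^+|-1> = 1;  sigma^- = E_21 : <-1|sigma^-|1> = 1.\<close>
definition sigma_plus :: "bool \<Rightarrow> bool \<Rightarrow> complex" where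
  "sigma_plus a b = (if a \<and> \<not> b then 1 else 0)"

definition sigma_minus :: "bool \<Rightarrow> bool \<Rightarrow> complex" where
  "sigma_minus a b = (if \<not> a \<and> b then 1 else 0)"

definition x_plus :: "complex \<Rightarrow> complex \<Rightarrow> complex" where
  "x_plus q l = (l * q - 1 / (q * l) + (l - 1 / l)) / 2"

definition x_minus :: "complex \<Rightarrow> complex \<Rightarrow> complex" where
  "x_minus q l = (l * q - 1 / (q * l) - (l - 1 / l)) / 2"

text \<open>2x2 matrices (auxiliary space, indices 0,1) with operator entries.\<close>
type_synonym auxmat = "nat \<Rightarrow> nat \<Rightarrow> qop"

definition aux_mult :: "nat \<Rightarrow> auxmat \<Rightarrow> auxmat \<Rightarrow> auxmat" where
  "aux_mult N M1 M2 = (\<lambda>i j. op_add (op_mult N (M1 i 0) (M2 0 j)) (op_mult N (M1 i 1) (M2 1 j)))"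

definition aux_id :: auxmat where
  "aux_id = (\<lambda>i j. if i = j then op_id else op_zero)"

definition lax :: "complex \<Rightarrow> nat \<Rightarrow> nat \<Rightarrow> complex \<Rightarrow> auxmat" where
  "lax q N n l = (\<lambda>i j.
     if i = 0 \<and> j = 0 then local_op N n (\<lambda>a b. x_plus q l * loc_id a b + x_minus q l * sigma_z a b)
     else if i = 0 \<and> j = 1 then local_op N n (\<lambda>a b. (q - 1 / q) * sigma_minus a b)
     else if i = 1 \<and> j = 0 then local_op N n (\<lambda>a b. (q - 1 / q) * sigma_plus a b)
     else local_op N n (\<lambda>a b. x_plus q l * loc_id a b - x_minus q l * sigma_z a b))"

text \<open>mono_aux n = L_{0n}(l/eta_n) ... L_{01}(l/eta_1) (0-based sites n-1,...,0).\<close>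
fun mono_aux :: "complex \<Rightarrow> (nat \<Rightarrow> complex) \<Rightarrow> nat \<Rightarrow> complex \<Rightarrow> nat \<Rightarrow> auxmat" where
  "mono_aux q eta N l 0 = aux_id"
| "mono_aux q eta N l (Suc n) = aux_mult N (lax q N n (l / eta n)) (mono_aux q eta N l n)"

definition monodromy :: "complex \<Rightarrow> (nat \<Rightarrow> complex) \<Rightarrow> nat \<Rightarrow> complex \<Rightarrow> auxmat" where
  "monodromy q eta N l = mono_aux q eta N l N"

definition opB :: "complex \<Rightarrow> (nat \<Rightarrow> complex) \<Rightarrow> nat \<Rightarrow> complex \<Rightarrow> qop" where
  "opB q eta N l = monodromy q eta N l 0 1"

definition opC :: "complex \<Rightarrow> (nat \<Rightarrow> complex) \<Rightarrow> nat \<Rightarrow> complex \<Rightarrow> qop" where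
  "opC q eta N l = monodromy q eta N l 1 0"

definition a_fun :: "complex \<Rightarrow> (nat \<Rightarrow> complex) \<Rightarrow> nat \<Rightarrow> complex \<Rightarrow> complex" where
  "a_fun q eta N l = - (\<Prod>n<N. l * q / eta n - eta n / (l * q))"

definition d_fun :: "(nat \<Rightarrow> complex) \<Rightarrow> nat \<Rightarrow> complex \<Rightarrow> complex" where
  "d_fun eta N l = (\<Prod>n<N. l / eta n - eta n / l)"

definition norm_sov :: "(nat \<Rightarrow> complex) \<Rightarrow> nat \<Rightarrow> complex" where
  "norm_sov eta N = (\<Prod>b<N. \<Prod>a\<in>{b<..<N}. csqrt (eta a / eta b - eta b / eta a))"

definition ref_state :: "nat \<Rightarrow> qvec" where
  "ref_state N = (\<lambda>x. if x = replicate N True then 1 else 0)"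

definition covec_op :: "nat \<Rightarrow> qvec \<Rightarrow> qop \<Rightarrow> qvec" where
  "covec_op N v A = (\<lambda>y. \<Sum>x\<in>confs N. v x * A x y)"

definition op_vec :: "nat \<Rightarrow> qop \<Rightarrow> qvec \<Rightarrow> qvec" where
  "op_vec N A w = (\<lambda>x. \<Sum>y\<in>confs N. A x y * w y)"

definition pairing :: "nat \<Rightarrow> qvec \<Rightarrow> qvec \<Rightarrow> complex" where
  "pairing N v w = (\<Sum>x\<in>confs N. v x * w x)"

text \<open>Left SOV covector <h| = (1/n) <0| prod_n (C(eta_n)/d(eta_n/q))^{h_n},
  the product taken in the order n = 1, ..., N from left to right.\<close>
definition left_sov :: "complex \<Rightarrow> (nat \<Rightarrow> complex) \<Rightarrow> nat \<Rightarrow> bool list \<Rightarrow> qvec" where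
  "left_sov q eta N h =
     fold (\<lambda>n v. if h ! n then (\<lambda>y. covec_op N v (opC q eta N (eta n)) y / d_fun eta N (eta n / q)) else v)
       [0..<N] (\<lambda>x. ref_state N x / norm_sov eta N)"

text \<open>Right SOV vector |h> = (1/n) prod_n (B(eta_n)/a(eta_n))^{h_n} |0>,
  the product taken in the order n = 1, ..., N from left to right.\<close>
definition right_sov :: "complex \<Rightarrow> (nat \<Rightarrow> complex) \<Rightarrow> nat \<Rightarrow> bool list \<Rightarrow> qvec" where
  "right_sov q eta N h =
     foldr (\<lambda>n w. if h ! n then (\<lambda>x. op_vec N (opB q eta N (eta n)) w x / a_fun q eta N (eta n)) else w)
       [0..<N] (\<lambda>x. ref_state N x / norm_sov eta N)"

end

theory Submission
  imports Defs
begin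

lemma finite_confs[simp]: "finite (confs N)"
proof -
  have "confs N = {xs. set xs \<subseteq> UNIV \<and> length xs = N}" by (auto simp: confs_def)
  thus ?thesis using finite_lists_length_eq[of "UNIV::bool set" N] by simp
qed

lemma confs_Suc: "confs (Suc N) = (\<lambda>(x,s). x @ [s]) ` (confs N \<times> UNIV)"
proof
  show "confs (Suc N) \<subseteq> (\<lambda>(x,s). x @ [s]) ` (confs N \<times> UNIV)"
  proof
    fix z assume "z \<in> confs (Suc N)"
    then have "length z = Suc N" by (simp add: confs_def)
    then obtain x s where "z = x @ [s]" "length x = N"
      by (metis length_Suc_conv_rev)
    thus "z \<in> (\<lambda>(x,s). x @ [s]) ` (confs N \<times> UNIV)" by (auto simp: confs_def)
  qed
qed (auto simp: confs_def)

lemma sum_confs_Suc: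
  "(\<Sum>z\<in>confs (Suc N). f z) = (\<Sum>z\<in>confs N. f (z @ [True]) + f (z @ [False]))"
proof -
  have inj: "inj_on (\<lambda>p. fst p @ [snd p]) (confs N \<times> (UNIV::bool set))"
    by (auto simp: inj_on_def)
  have im: "confs (Suc N) = (\<lambda>p. fst p @ [snd p]) ` (confs N \<times> UNIV)"
    unfolding confs_Suc by (auto simp: image_def)
  have "(\<Sum>z\<in>confs (Suc N). f z) = (\<Sum>p\<in>confs N \<times> UNIV. f (fst p @ [snd p]))"
    by (rule sum.reindex_cong[OF inj im]) simp
  also have "\<dots> = (\<Sum>z\<in>confs N. \<Sum>s\<in>UNIV. f (z @ [s]))"
    by (simp add: sum.cartesian_product split_beta)
  also have "\<dots> = (\<Sum>z\<in>confs N. f (z @ [True]) + f (z @ [False]))"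
    by (simp add: UNIV_bool add.commute)
  finally show ?thesis .
qed

lemma confs_snoc[simp]: "(x @ [s] \<in> confs (Suc N)) = (x \<in> confs N)"
  by (simp add: confs_def)

lemma confs_SucE:
  assumes "z \<in> confs (Suc N)" obtains x s where "z = x @ [s]" "x \<in> confs N"
  using assms unfolding confs_Suc by auto

lemma local_op_snoc_lt:
  assumes "n < N" "x \<in> confs N" "y \<in> confs N"
  shows "local_op (Suc N) n m (x @ [s]) (y @ [t]) = (if s = t then local_op N n m x y else 0)"
proof -
  have lx: "length x = N" and ly: "length y = N" using assms by (auto simp: confs_def)
  have "(\<forall>k<Suc N. k \<noteq> n \<longrightarrow> (x @ [s]) ! k = (y @ [t]) ! k) =
        ((\<forall>k<N. k \<noteq> n \<longrightarrow> x ! k = y ! k) \<and> s = t)"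
  proof
    assume H: "\<forall>k<Suc N. k \<noteq> n \<longrightarrow> (x @ [s]) ! k = (y @ [t]) ! k"
    have "s = t" using H[rule_format, of N] assms lx ly by (simp add: nth_append)
    moreover have "\<forall>k<N. k \<noteq> n \<longrightarrow> x ! k = y ! k"
    proof (intro allI impI)
      fix k assume "k < N" "k \<noteq> n"
      thus "x ! k = y ! k" using H[rule_format, of k] lx ly by (simp add: nth_append)
    qed
    ultimately show "(\<forall>k<N. k \<noteq> n \<longrightarrow> x ! k = y ! k) \<and> s = t" by simp
  next
    assume "(\<forall>k<N. k \<noteq> n \<longrightarrow> x ! k = y ! k) \<and> s = t"
    thus "\<forall>k<Suc N. k \<noteq> n \<longrightarrow> (x @ [s]) ! k = (y @ [t]) ! k"
      using lx ly by (auto simp: nth_append less_Suc_eq)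
  qed
  moreover have "(x @ [s]) ! n = x ! n" "(y @ [t]) ! n = y ! n" using lx ly assms(1)
    by (auto simp: nth_append)
  ultimately show ?thesis by (auto simp: local_op_def)
qed

lemma local_op_snoc_eq:
  assumes "x \<in> confs N" "y \<in> confs N"
  shows "local_op (Suc N) N m (x @ [s]) (y @ [t]) = (if x = y then m s t else 0)"
proof -
  have lx: "length x = N" and ly: "length y = N" using assms by (auto simp: confs_def)
  have "(\<forall>k<Suc N. k \<noteq> N \<longrightarrow> (x @ [s]) ! k = (y @ [t]) ! k) = (x = y)"
    using lx ly by (auto simp: nth_append less_Suc_eq intro: nth_equalityI)
  thus ?thesis using lx ly by (simp add: local_op_def nth_append)
qed

lemma op_mult_snoc:
  "op_mult (Suc N) X Y (x @ [s]) (y @ [t]) =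
     op_mult N (\<lambda>a b. X (a @ [s]) (b @ [True])) (\<lambda>a b. Y (a @ [True]) (b @ [t])) x y +
     op_mult N (\<lambda>a b. X (a @ [s]) (b @ [False])) (\<lambda>a b. Y (a @ [False]) (b @ [t])) x y"
  by (simp add: op_mult_def sum_confs_Suc sum.distrib)


definition Lloc :: "complex \<Rightarrow> complex \<Rightarrow> nat \<Rightarrow> nat \<Rightarrow> bool \<Rightarrow> bool \<Rightarrow> complex" where
  "Lloc q l i j = (if i = 0 \<and> j = 0 then (\<lambda>a b. x_plus q l * loc_id a b + x_minus q l * sigma_z a b)
     else if i = 0 \<and> j = 1 then (\<lambda>a b. (q - 1 / q) * sigma_minus a b)
     else if i = 1 \<and> j = 0 then (\<lambda>a b. (q - 1 / q) * sigma_plus a b)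
     else (\<lambda>a b. x_plus q l * loc_id a b - x_minus q l * sigma_z a b))"

lemma lax_Lloc: "lax q N n l i j = local_op N n (Lloc q l i j)"
  by (simp add: lax_def Lloc_def)

lemma lax_snoc_lt:
  assumes "n < N" "x \<in> confs N" "y \<in> confs N"
  shows "lax q (Suc N) n l i j (x @ [s]) (y @ [t]) = (if s = t then lax q N n l i j x y else 0)"
  using assms by (simp add: lax_Lloc local_op_snoc_lt)

lemma lax_snoc_eq:
  assumes "x \<in> confs N" "y \<in> confs N"
  shows "lax q (Suc N) N l i j (x @ [s]) (y @ [t]) = (if x = y then Lloc q l i j s t else 0)"
  using assms by (simp add: lax_Lloc local_op_snoc_eq)

lemma mono_embed:
  assumes "n \<le> N" "x \<in> confs N" "y \<in> confs N"
  shows "mono_aux q eta (Suc N) l n i j (x @ [s]) (y @ [t]) =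
         (if s = t then mono_aux q eta N l n i j x y else 0)"
  using assms
proof (induction n arbitrary: i j x y s t)
  case 0
  thus ?case by (auto simp: aux_id_def op_id_def op_zero_def)
next
  case (Suc n)
  have key: "op_mult (Suc N) (lax q (Suc N) n (l / eta n) i a) (mono_aux q eta (Suc N) l n a j) (x @ [s]) (y @ [t])
     = (if s = t then op_mult N (lax q N n (l / eta n) i a) (mono_aux q eta N l n a j) x y else 0)" for a
  proof -
    have "op_mult (Suc N) (lax q (Suc N) n (l / eta n) i a) (mono_aux q eta (Suc N) l n a j) (x @ [s]) (y @ [t])
      = (\<Sum>z\<in>confs N. (if s = True then lax q N n (l / eta n) i a x z else 0) * (if True = t then mono_aux q eta N l n a j z y else 0)
         + (if s = False then lax q N n (l / eta n) i a x z else 0) * (if False = t then mono_aux q eta N l n a j z y else 0))"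
      unfolding op_mult_def sum_confs_Suc
      apply (rule sum.cong, simp)
      using Suc.prems Suc.IH by (simp add: lax_snoc_lt del: if_True if_False)
    also have "\<dots> = (if s = t then op_mult N (lax q N n (l / eta n) i a) (mono_aux q eta N l n a j) x y else 0)"
      by (cases s; cases t; simp add: op_mult_def)
    finally show ?thesis .
  qed
  show ?case by (simp add: aux_mult_def op_add_def key)
qed

lemma monodromy_snoc:
  assumes "x \<in> confs N" "y \<in> confs N"
  shows "monodromy q eta (Suc N) l i j (x @ [s]) (y @ [t]) =
     Lloc q (l / eta N) i 0 s t * monodromy q eta N l 0 j x y + Lloc q (l / eta N) i 1 s t * monodromy q eta N l 1 j x y"
proof -
  have key: "op_mult (Suc N) (lax q (Suc N) N (l / eta N) i a) (mono_aux q eta (Suc N) l N a j) (x @ [s]) (y @ [t])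
     = Lloc q (l / eta N) i a s t * monodromy q eta N l a j x y" for a
  proof -
    have "op_mult (Suc N) (lax q (Suc N) N (l / eta N) i a) (mono_aux q eta (Suc N) l N a j) (x @ [s]) (y @ [t])
      = (\<Sum>z\<in>confs N. (if x = z then Lloc q (l / eta N) i a s True else 0) * (if True = t then mono_aux q eta N l N a j z y else 0)
         + (if x = z then Lloc q (l / eta N) i a s False else 0) * (if False = t then mono_aux q eta N l N a j z y else 0))"
      unfolding op_mult_def sum_confs_Suc
      apply (rule sum.cong, simp)
      using assms by (simp add: lax_snoc_eq mono_embed del: if_True if_False)
    also have "\<dots> = (\<Sum>z\<in>confs N. if x = z then Lloc q (l / eta N) i a s t * monodromy q eta N l a j z y else 0)"
      by (rule sum.cong; cases t; simp add: monodromy_def)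
    also have "\<dots> = Lloc q (l / eta N) i a s t * monodromy q eta N l a j x y"
      using assms by (simp add: sum.delta)
    finally show ?thesis .
  qed
  show ?thesis by (simp add: monodromy_def aux_mult_def op_add_def key[unfolded monodromy_def])
qed


definition br :: "complex \<Rightarrow> complex" where "br z = z - 1 / z"

definition Rm :: "complex \<Rightarrow> complex \<Rightarrow> nat \<Rightarrow> nat \<Rightarrow> nat \<Rightarrow> nat \<Rightarrow> complex" where
  "Rm q u i k j l = (if i = j \<and> k = l then (if i = k then br (u * q) else br u)
     else if i = l \<and> k = j \<and> i \<noteq> k then q - 1 / q else 0)"

lemma sum2: "(\<Sum>i<(2::nat). f i) = f 0 + f (Suc 0)"
  by (simp add: numeral_2_eq_2)

lemma sumB: "(\<Sum>r\<in>(UNIV::bool set). f r) = f True + f False"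
  by (simp add: UNIV_bool add.commute)

lemma less2: "(i::nat) < 2 \<longleftrightarrow> i = 0 \<or> i = Suc 0" by auto

lemma Lloc_vals:
  "Lloc q l 0 0 True True = br (l * q)" "Lloc q l 0 0 False False = br l"
  "Lloc q l 0 0 True False = 0" "Lloc q l 0 0 False True = 0"
  "Lloc q l (Suc 0) (Suc 0) True True = br l" "Lloc q l (Suc 0) (Suc 0) False False = br (l * q)"
  "Lloc q l (Suc 0) (Suc 0) True False = 0" "Lloc q l (Suc 0) (Suc 0) False True = 0"
  "Lloc q l 0 (Suc 0) False True = q - 1/q" "Lloc q l 0 (Suc 0) True True = 0"
  "Lloc q l 0 (Suc 0) True False = 0" "Lloc q l 0 (Suc 0) False False = 0"
  "Lloc q l (Suc 0) 0 True False = q - 1/q" "Lloc q l (Suc 0) 0 True True = 0"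
  "Lloc q l (Suc 0) 0 False True = 0" "Lloc q l (Suc 0) 0 False False = 0"
  by (simp_all add: Lloc_def x_plus_def x_minus_def br_def loc_id_def sigma_z_def sigma_plus_def
      sigma_minus_def field_simps)

lemma Rm_vals:
  "Rm q u 0 0 0 0 = br (u*q)" "Rm q u (Suc 0) (Suc 0) (Suc 0) (Suc 0) = br (u*q)" "Rm q u 0 (Suc 0) 0 (Suc 0) = br u" "Rm q u (Suc 0) 0 (Suc 0) 0 = br u"
  "Rm q u 0 (Suc 0) (Suc 0) 0 = q - 1/q" "Rm q u (Suc 0) 0 0 (Suc 0) = q - 1/q"
  "Rm q u 0 0 0 (Suc 0) = 0" "Rm q u 0 0 (Suc 0) 0 = 0" "Rm q u 0 0 (Suc 0) (Suc 0) = 0"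
  "Rm q u 0 (Suc 0) 0 0 = 0" "Rm q u 0 (Suc 0) (Suc 0) (Suc 0) = 0" "Rm q u (Suc 0) 0 0 0 = 0" "Rm q u (Suc 0) 0 (Suc 0) (Suc 0) = 0"
  "Rm q u (Suc 0) (Suc 0) 0 0 = 0" "Rm q u (Suc 0) (Suc 0) 0 (Suc 0) = 0" "Rm q u (Suc 0) (Suc 0) (Suc 0) 0 = 0"
  by (simp_all add: Rm_def)

lemma RLL_TrueTrue:
  fixes q x y :: complex
  assumes "q \<noteq> 0" "x \<noteq> 0" "y \<noteq> 0" "i < 2" "k < 2" "a < 2" "b < 2"
  shows "(\<Sum>i'<2. \<Sum>k'<2. \<Sum>r\<in>UNIV. Rm q (x / y) i k i' k' * Lloc q x i' a True r * Lloc q y k' b r True) =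
         (\<Sum>a'<2. \<Sum>b'<2. \<Sum>r\<in>UNIV. Lloc q y k b' True r * Lloc q x i a' r True * Rm q (x / y) a' b' a b)"
proof -
  have "i = 0 \<or> i = Suc 0" "k = 0 \<or> k = Suc 0" "a = 0 \<or> a = Suc 0" "b = 0 \<or> b = Suc 0"
    using assms by auto
  thus ?thesis using assms(1-3)
  by (elim disjE; simp add: sum2 sumB Rm_vals Lloc_vals; simp add: br_def field_simps)
qed

lemma RLL_TrueFalse:
  fixes q x y :: complex
  assumes "q \<noteq> 0" "x \<noteq> 0" "y \<noteq> 0" "i < 2" "k < 2" "a < 2" "b < 2"
  shows "(\<Sum>i'<2. \<Sum>k'<2. \<Sum>r\<in>UNIV. Rm q (x / y) i k i' k' * Lloc q x i' a True r * Lloc q y k' b r False) =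
         (\<Sum>a'<2. \<Sum>b'<2. \<Sum>r\<in>UNIV. Lloc q y k b' True r * Lloc q x i a' r False * Rm q (x / y) a' b' a b)"
proof -
  have "i = 0 \<or> i = Suc 0" "k = 0 \<or> k = Suc 0" "a = 0 \<or> a = Suc 0" "b = 0 \<or> b = Suc 0"
    using assms by auto
  thus ?thesis using assms(1-3)
  by (elim disjE; simp add: sum2 sumB Rm_vals Lloc_vals; simp add: br_def field_simps)
qed

lemma RLL_FalseTrue:
  fixes q x y :: complex
  assumes "q \<noteq> 0" "x \<noteq> 0" "y \<noteq> 0" "i < 2" "k < 2" "a < 2" "b < 2"
  shows "(\<Sum>i'<2. \<Sum>k'<2. \<Sum>r\<in>UNIV. Rm q (x / y) i k i' k' * Lloc q x i' a False r * Lloc q y k' b r True) =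
         (\<Sum>a'<2. \<Sum>b'<2. \<Sum>r\<in>UNIV. Lloc q y k b' False r * Lloc q x i a' r True * Rm q (x / y) a' b' a b)"
proof -
  have "i = 0 \<or> i = Suc 0" "k = 0 \<or> k = Suc 0" "a = 0 \<or> a = Suc 0" "b = 0 \<or> b = Suc 0"
    using assms by auto
  thus ?thesis using assms(1-3)
  by (elim disjE; simp add: sum2 sumB Rm_vals Lloc_vals; simp add: br_def field_simps)
qed

lemma RLL_FalseFalse:
  fixes q x y :: complex
  assumes "q \<noteq> 0" "x \<noteq> 0" "y \<noteq> 0" "i < 2" "k < 2" "a < 2" "b < 2"
  shows "(\<Sum>i'<2. \<Sum>k'<2. \<Sum>r\<in>UNIV. Rm q (x / y) i k i' k' * Lloc q x i' a False r * Lloc q y k' b r False) =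
         (\<Sum>a'<2. \<Sum>b'<2. \<Sum>r\<in>UNIV. Lloc q y k b' False r * Lloc q x i a' r False * Rm q (x / y) a' b' a b)"
proof -
  have "i = 0 \<or> i = Suc 0" "k = 0 \<or> k = Suc 0" "a = 0 \<or> a = Suc 0" "b = 0 \<or> b = Suc 0"
    using assms by auto
  thus ?thesis using assms(1-3)
  by (elim disjE; simp add: sum2 sumB Rm_vals Lloc_vals; simp add: br_def field_simps)
qed

lemma RLL:
  fixes q x y :: complex
  assumes "q \<noteq> 0" "x \<noteq> 0" "y \<noteq> 0" "i < 2" "k < 2" "a < 2" "b < 2"
  shows "(\<Sum>i'<2. \<Sum>k'<2. \<Sum>r\<in>UNIV. Rm q (x / y) i k i' k' * Lloc q x i' a s r * Lloc q y k' b r t) =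
         (\<Sum>a'<2. \<Sum>b'<2. \<Sum>r\<in>UNIV. Lloc q y k b' s r * Lloc q x i a' r t * Rm q (x / y) a' b' a b)"
  using RLL_TrueTrue[OF assms] RLL_TrueFalse[OF assms] RLL_FalseTrue[OF assms] RLL_FalseFalse[OF assms]
  by (cases s; cases t) simp_all


lemma op_mult_cong:
  assumes "\<And>z. z \<in> confs N \<Longrightarrow> X x z = X' x z" "\<And>z. z \<in> confs N \<Longrightarrow> Y z y = Y' z y"
  shows "op_mult N X Y x y = op_mult N X' Y' x y"
  unfolding op_mult_def using assms by (intro sum.cong) auto

lemma op_mult_lin:
  "op_mult N (\<lambda>u v. \<Sum>a<2. f a * X a u v) (\<lambda>u v. \<Sum>b<2. g b * Y b u v) x y =
   (\<Sum>a<(2::nat). \<Sum>b<(2::nat). f a * g b * op_mult N (X a) (Y b) x y)"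
proof -
  have "op_mult N (\<lambda>u v. \<Sum>a<2. f a * X a u v) (\<lambda>u v. \<Sum>b<2. g b * Y b u v) x y
     = (\<Sum>z\<in>confs N. \<Sum>a<(2::nat). \<Sum>b<(2::nat). f a * g b * (X a x z * Y b z y))"
    unfolding op_mult_def sum_product by (simp add: ac_simps)
  also have "\<dots> = (\<Sum>a<(2::nat). \<Sum>z\<in>confs N. \<Sum>b<(2::nat). f a * g b * (X a x z * Y b z y))"
    by (rule sum.swap)
  also have "\<dots> = (\<Sum>a<(2::nat). \<Sum>b<(2::nat). \<Sum>z\<in>confs N. f a * g b * (X a x z * Y b z y))"
    by (rule sum.cong[OF refl], rule sum.swap)
  also have "\<dots> = (\<Sum>a<(2::nat). \<Sum>b<(2::nat). f a * g b * op_mult N (X a) (Y b) x y)"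
    by (simp add: op_mult_def sum_distrib_left)
  finally show ?thesis .
qed

lemma prod_snoc:
  assumes "x \<in> confs N" "y \<in> confs N"
  shows "op_mult (Suc N) (monodromy q eta (Suc N) la i j) (monodromy q eta (Suc N) mu k l) (x @ [s]) (y @ [t])
   = (\<Sum>r\<in>UNIV. \<Sum>a<2. \<Sum>b<2. Lloc q (la / eta N) i a s r * Lloc q (mu / eta N) k b r t *
        op_mult N (monodromy q eta N la a j) (monodromy q eta N mu b l) x y)"
proof -
  let ?T = "monodromy q eta N" and ?T' = "monodromy q eta (Suc N)"
  have blk: "op_mult N (\<lambda>a b. ?T' la i j (a @ [s]) (b @ [r])) (\<lambda>a b. ?T' mu k l (a @ [r]) (b @ [t])) x y
     = (\<Sum>a<2. \<Sum>b<2. Lloc q (la / eta N) i a s r * Lloc q (mu / eta N) k b r t *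
        op_mult N (?T la a j) (?T mu b l) x y)" for r
  proof -
    have "op_mult N (\<lambda>a b. ?T' la i j (a @ [s]) (b @ [r])) (\<lambda>a b. ?T' mu k l (a @ [r]) (b @ [t])) x y
      = op_mult N (\<lambda>u v. \<Sum>a<2. Lloc q (la / eta N) i a s r * ?T la a j u v)
                  (\<lambda>u v. \<Sum>b<2. Lloc q (mu / eta N) k b r t * ?T mu b l u v) x y"
      by (rule op_mult_cong) (simp_all add: monodromy_snoc assms sum2)
    also have "\<dots> = (\<Sum>a<2. \<Sum>b<2. Lloc q (la / eta N) i a s r * Lloc q (mu / eta N) k b r t *
        op_mult N (?T la a j) (?T mu b l) x y)"
      by (rule op_mult_lin)
    finally show ?thesis .
  qed
  show ?thesis by (simp add: op_mult_snoc blk sumB)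
qed

definition RTT :: "complex \<Rightarrow> (nat \<Rightarrow> complex) \<Rightarrow> nat \<Rightarrow> complex \<Rightarrow> complex \<Rightarrow> bool" where
  "RTT q eta N la mu \<longleftrightarrow> (\<forall>i<2. \<forall>k<2. \<forall>j<2. \<forall>l<2. \<forall>x\<in>confs N. \<forall>y\<in>confs N.
     (\<Sum>i'<2. \<Sum>k'<2. Rm q (la / mu) i k i' k' * op_mult N (monodromy q eta N la i' j) (monodromy q eta N mu k' l) x y)
   = (\<Sum>j'<2. \<Sum>l'<2. op_mult N (monodromy q eta N mu k l') (monodromy q eta N la i j') x y * Rm q (la / mu) j' l' j l))"

lemma confs_0: "confs 0 = {[]}" by (auto simp: confs_def)

lemma RTT_0: "RTT q eta 0 la mu"
  unfolding RTT_def
  by (auto simp: less2 confs_0 monodromy_def op_mult_def aux_id_def op_id_def op_zero_def sum2)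

lemma RTT_Suc:
  assumes IH: "RTT q eta N la mu" and q: "q \<noteq> 0" and la: "la \<noteq> 0" and mu: "mu \<noteq> 0" and e: "eta N \<noteq> 0"
  shows "RTT q eta (Suc N) la mu"
  unfolding RTT_def
proof (intro allI impI ballI)
  fix i k j l x' y' assume ik: "i < (2::nat)" "k < (2::nat)" "j < (2::nat)" "l < (2::nat)"
    and xy: "x' \<in> confs (Suc N)" "y' \<in> confs (Suc N)"
  obtain x s where x: "x' = x @ [s]" "x \<in> confs N" using xy(1) by (rule confs_SucE)
  obtain y t where y: "y' = y @ [t]" "y \<in> confs N" using xy(2) by (rule confs_SucE)
  let ?T = "monodromy q eta N"
  let ?R = "Rm q (la / mu)"
  let ?Ll = "Lloc q (la / eta N)" and ?Lm = "Lloc q (mu / eta N)"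
  define P where "P a b = op_mult N (?T la a j) (?T mu b l) x y" for a b
  define Q where "Q b' l' a' j' = op_mult N (?T mu b' l') (?T la a' j') x y" for b' l' a' j'
  have u: "la / mu = (la / eta N) / (mu / eta N)" using e by simp
  have LHS: "(\<Sum>i'<2. \<Sum>k'<2. ?R i k i' k' * op_mult (Suc N) (monodromy q eta (Suc N) la i' j) (monodromy q eta (Suc N) mu k' l) x' y')
     = (\<Sum>a<2. \<Sum>b<2. (\<Sum>i'<2. \<Sum>k'<2. \<Sum>r\<in>UNIV. ?R i k i' k' * ?Ll i' a s r * ?Lm k' b r t) * P a b)"
    unfolding x y prod_snoc[OF x(2) y(2)] P_def
    by (simp add: sum2 sumB algebra_simps)
  also have "\<dots> = (\<Sum>a<2. \<Sum>b<2. (\<Sum>a'<2. \<Sum>b'<2. \<Sum>r\<in>UNIV. ?Lm k b' s r * ?Ll i a' r t * ?R a' b' a b) * P a b)"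
  proof (intro sum.cong refl)
    fix a b assume "a \<in> {..<2::nat}" "b \<in> {..<2::nat}"
    thus "(\<Sum>i'<2. \<Sum>k'<2. \<Sum>r\<in>UNIV. ?R i k i' k' * ?Ll i' a s r * ?Lm k' b r t) * P a b =
          (\<Sum>a'<2. \<Sum>b'<2. \<Sum>r\<in>UNIV. ?Lm k b' s r * ?Ll i a' r t * ?R a' b' a b) * P a b"
    proof -
      have "la / eta N \<noteq> 0" "mu / eta N \<noteq> 0" using la mu e by auto
      from RLL[OF q this ik(1,2), of a b s t] \<open>a \<in> _\<close> \<open>b \<in> _\<close>
      show ?thesis unfolding u[symmetric] by simp
    qed
  qed
  also have "\<dots> = (\<Sum>a'<2. \<Sum>b'<2. \<Sum>r\<in>UNIV. ?Lm k b' s r * ?Ll i a' r t * (\<Sum>a<2. \<Sum>b<2. ?R a' b' a b * P a b))"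
    by (simp add: sum2 sumB algebra_simps)
  also have "\<dots> = (\<Sum>a'<2. \<Sum>b'<2. \<Sum>r\<in>UNIV. ?Lm k b' s r * ?Ll i a' r t * (\<Sum>j'<2. \<Sum>l'<2. Q b' l' a' j' * ?R j' l' j l))"
  proof (intro sum.cong refl)
    fix a' b' r assume "a' \<in> {..<2::nat}" "b' \<in> {..<2::nat}"
    thus "?Lm k b' s r * ?Ll i a' r t * (\<Sum>a<2. \<Sum>b<2. ?R a' b' a b * P a b) =
          ?Lm k b' s r * ?Ll i a' r t * (\<Sum>j'<2. \<Sum>l'<2. Q b' l' a' j' * ?R j' l' j l)"
      using IH ik x(2) y(2) unfolding RTT_def P_def Q_def by auto
  qed
  also have "\<dots> = (\<Sum>j'<2. \<Sum>l'<2. op_mult (Suc N) (monodromy q eta (Suc N) mu k l') (monodromy q eta (Suc N) la i j') x' y' * ?R j' l' j l)"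
    unfolding x y prod_snoc[OF x(2) y(2)] Q_def
    by (simp add: sum2 sumB algebra_simps)
  finally show "(\<Sum>i'<2. \<Sum>k'<2. ?R i k i' k' * op_mult (Suc N) (monodromy q eta (Suc N) la i' j) (monodromy q eta (Suc N) mu k' l) x' y')
     = (\<Sum>j'<2. \<Sum>l'<2. op_mult (Suc N) (monodromy q eta (Suc N) mu k l') (monodromy q eta (Suc N) la i j') x' y' * ?R j' l' j l)" .
qed

lemma RTT_all:
  assumes "q \<noteq> 0" "la \<noteq> 0" "mu \<noteq> 0" "\<forall>n<N. eta n \<noteq> 0"
  shows "RTT q eta N la mu"
  using assms
proof (induction N)
  case 0 show ?case by (rule RTT_0)
next
  case (Suc N) thus ?case using RTT_Suc by auto
qed


lemma RTT_inst:
  assumes "RTT q eta N la mu" "i < 2" "k < 2" "j < 2" "l < 2" "x \<in> confs N" "y \<in> confs N"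
  shows "(\<Sum>i'<2. \<Sum>k'<2. Rm q (la / mu) i k i' k' * op_mult N (monodromy q eta N la i' j) (monodromy q eta N mu k' l) x y)
   = (\<Sum>j'<2. \<Sum>l'<2. op_mult N (monodromy q eta N mu k l') (monodromy q eta N la i j') x y * Rm q (la / mu) j' l' j l)"
  using assms unfolding RTT_def by blast

lemma rel_DB:
  assumes "RTT q eta N la mu" "x \<in> confs N" "y \<in> confs N"
  shows "br (la / mu) * op_mult N (monodromy q eta N la (Suc 0) (Suc 0)) (monodromy q eta N mu 0 (Suc 0)) x y
     + (q - 1/q) * op_mult N (monodromy q eta N la 0 (Suc 0)) (monodromy q eta N mu (Suc 0) (Suc 0)) x y
     = br (la / mu * q) * op_mult N (monodromy q eta N mu 0 (Suc 0)) (monodromy q eta N la (Suc 0) (Suc 0)) x y"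
  using RTT_inst[OF assms(1) _ _ _ _ assms(2,3), of "Suc 0" 0 "Suc 0" "Suc 0"]
  by (simp add: sum2 Rm_vals algebra_simps)

lemma rel_CD:
  assumes "RTT q eta N la mu" "x \<in> confs N" "y \<in> confs N"
  shows "br (la / mu * q) * op_mult N (monodromy q eta N la (Suc 0) (Suc 0)) (monodromy q eta N mu (Suc 0) 0) x y
     = br (la / mu) * op_mult N (monodromy q eta N mu (Suc 0) 0) (monodromy q eta N la (Suc 0) (Suc 0)) x y
     + (q - 1/q) * op_mult N (monodromy q eta N mu (Suc 0) (Suc 0)) (monodromy q eta N la (Suc 0) 0) x y"
  using RTT_inst[OF assms(1) _ _ _ _ assms(2,3), of "Suc 0" "Suc 0" "Suc 0" 0]
  by (simp add: sum2 Rm_vals algebra_simps)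

lemma rel_CC:
  assumes "RTT q eta N la mu" "x \<in> confs N" "y \<in> confs N"
  shows "br (la / mu * q) * op_mult N (monodromy q eta N la (Suc 0) 0) (monodromy q eta N mu (Suc 0) 0) x y
     = br (la / mu * q) * op_mult N (monodromy q eta N mu (Suc 0) 0) (monodromy q eta N la (Suc 0) 0) x y"
  using RTT_inst[OF assms(1) _ _ _ _ assms(2,3), of "Suc 0" "Suc 0" 0 0]
  by (simp add: sum2 Rm_vals algebra_simps)

lemma rel_AB:
  assumes "RTT q eta N la mu" "x \<in> confs N" "y \<in> confs N"
  shows "br (la / mu * q) * op_mult N (monodromy q eta N la 0 0) (monodromy q eta N mu 0 (Suc 0)) x y
     = br (la / mu) * op_mult N (monodromy q eta N mu 0 (Suc 0)) (monodromy q eta N la 0 0) x y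
     + (q - 1/q) * op_mult N (monodromy q eta N mu 0 0) (monodromy q eta N la 0 (Suc 0)) x y"
  using RTT_inst[OF assms(1) _ _ _ _ assms(2,3), of 0 0 0 "Suc 0"]
  by (simp add: sum2 Rm_vals algebra_simps)

lemma rel_DC:
  assumes "RTT q eta N la mu" "x \<in> confs N" "y \<in> confs N"
  shows "br (la / mu * q) * op_mult N (monodromy q eta N la (Suc 0) 0) (monodromy q eta N mu (Suc 0) (Suc 0)) x y
     = br (la / mu) * op_mult N (monodromy q eta N mu (Suc 0) (Suc 0)) (monodromy q eta N la (Suc 0) 0) x y
     + (q - 1/q) * op_mult N (monodromy q eta N mu (Suc 0) 0) (monodromy q eta N la (Suc 0) (Suc 0)) x y"
  using RTT_inst[OF assms(1) _ _ _ _ assms(2,3), of "Suc 0" "Suc 0" 0 "Suc 0"]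
  by (simp add: sum2 Rm_vals algebra_simps)


definition alpha :: "complex \<Rightarrow> (nat \<Rightarrow> complex) \<Rightarrow> nat \<Rightarrow> complex \<Rightarrow> complex" where
  "alpha q eta N l = (\<Prod>n<N. br (l / eta n * q))"

definition delta :: "(nat \<Rightarrow> complex) \<Rightarrow> nat \<Rightarrow> complex \<Rightarrow> complex" where
  "delta eta N l = (\<Prod>n<N. br (l / eta n))"

lemma br_id: "q \<noteq> 0 \<Longrightarrow> z \<noteq> 0 \<Longrightarrow> br z * br z - (q - 1/q) * (q - 1/q) = br (z * q) * br (z / q)"
  by (simp add: br_def field_simps)

lemma br_one: "br 1 = 0" by (simp add: br_def)
lemma br_inv: "br (1 / z) = - br z" by (simp add: br_def)
lemma br_q: "br q = q - 1 / q" by (simp add: br_def)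

definition QD :: "complex \<Rightarrow> (nat \<Rightarrow> complex) \<Rightarrow> nat \<Rightarrow> complex \<Rightarrow> bool" where
  "QD q eta N la \<longleftrightarrow> (\<forall>x\<in>confs N. \<forall>y\<in>confs N.
     op_mult N (monodromy q eta N la (Suc 0) (Suc 0)) (monodromy q eta N (la / q) 0 0) x y
       = op_mult N (monodromy q eta N la (Suc 0) 0) (monodromy q eta N (la / q) 0 (Suc 0)) x y
         + (if x = y then alpha q eta N la * delta eta N (la / q) else 0)
   \<and> op_mult N (monodromy q eta N la 0 0) (monodromy q eta N (la / q) (Suc 0) (Suc 0)) x y
       = op_mult N (monodromy q eta N la 0 (Suc 0)) (monodromy q eta N (la / q) (Suc 0) 0) x y
         + (if x = y then alpha q eta N la * delta eta N (la / q) else 0))"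

lemma QD_0: "QD q eta 0 la"
  by (simp add: QD_def confs_0 monodromy_def op_mult_def aux_id_def op_id_def op_zero_def alpha_def delta_def)

lemma rel_AB_q:
  assumes "RTT q eta N (la / q) la" "x \<in> confs N" "y \<in> confs N" "q \<noteq> 0" "q - 1/q \<noteq> 0" "la \<noteq> 0"
  shows "op_mult N (monodromy q eta N la 0 0) (monodromy q eta N (la / q) 0 (Suc 0)) x y
       = op_mult N (monodromy q eta N la 0 (Suc 0)) (monodromy q eta N (la / q) 0 0) x y"
proof -
  have "la / q / la = 1 / q" using assms by simp
  hence "(q - 1/q) * (op_mult N (monodromy q eta N la 0 0) (monodromy q eta N (la / q) 0 (Suc 0)) x y
       - op_mult N (monodromy q eta N la 0 (Suc 0)) (monodromy q eta N (la / q) 0 0) x y) = 0"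
    using rel_AB[OF assms(1-3)] assms(4,5,6) by (simp add: br_one br_inv br_q algebra_simps)
  thus ?thesis using assms(5) by simp
qed

lemma rel_DC_q:
  assumes "RTT q eta N (la / q) la" "x \<in> confs N" "y \<in> confs N" "q \<noteq> 0" "q - 1/q \<noteq> 0" "la \<noteq> 0"
  shows "op_mult N (monodromy q eta N la (Suc 0) (Suc 0)) (monodromy q eta N (la / q) (Suc 0) 0) x y
       = op_mult N (monodromy q eta N la (Suc 0) 0) (monodromy q eta N (la / q) (Suc 0) (Suc 0)) x y"
proof -
  have "la / q / la = 1 / q" using assms by simp
  hence "(q - 1/q) * (op_mult N (monodromy q eta N la (Suc 0) (Suc 0)) (monodromy q eta N (la / q) (Suc 0) 0) x y
       - op_mult N (monodromy q eta N la (Suc 0) 0) (monodromy q eta N (la / q) (Suc 0) (Suc 0)) x y) = 0"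
    using rel_DC[OF assms(1-3)] assms(4,5,6) by (simp add: br_one br_inv br_q algebra_simps)
  thus ?thesis using assms(5) by simp
qed

lemma QD_Suc:
  assumes IH: "QD q eta N la" and R: "RTT q eta N (la / q) la" and q: "q \<noteq> 0" "q - 1/q \<noteq> 0"
    and la: "la \<noteq> 0" and e: "eta N \<noteq> 0"
  shows "QD q eta (Suc N) la"
  unfolding QD_def
proof (intro ballI)
  fix x' y' assume xy: "x' \<in> confs (Suc N)" "y' \<in> confs (Suc N)"
  obtain x s where x: "x' = x @ [s]" "x \<in> confs N" using xy(1) by (rule confs_SucE)
  obtain y t where y: "y' = y @ [t]" "y \<in> confs N" using xy(2) by (rule confs_SucE)
  have sq: "la / q / eta N * q = la / eta N" using q by (simp add: field_simps)
  have bid: "br (la / eta N * q) * br (la / q / eta N) = br (la / eta N) * br (la / eta N) - (q - 1/q) * (q - 1/q)"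
    using br_id[of q "la / eta N"] q la e by (simp add: field_simps)
  have bid': "br (la * q / eta N) * br (la / (q * eta N)) = br (la / eta N) * br (la / eta N) - (q - 1/q) * (q - 1/q)"
    using bid by (simp add: field_simps)
  have bid'': "br (la / (q * eta N)) * br (la * q / eta N) = br (la / eta N) * br (la / eta N) - (q - 1/q) * (q - 1/q)"
    using bid' by (simp add: ac_simps)
  have ad: "alpha q eta N la * br (la*q/eta N) * (delta eta N (la/q) * br (la/(q*eta N))) = alpha q eta N la * delta eta N (la/q) * (br (la/eta N)*br (la/eta N) - (q-1/q)*(q-1/q))"
    by (simp add: bid'[symmetric] ac_simps)
  have al: "alpha q eta (Suc N) la = alpha q eta N la * br (la / eta N * q)" by (simp add: alpha_def)
  have de: "delta eta (Suc N) (la / q) = delta eta N (la / q) * br (la / q / eta N)" by (simp add: delta_def)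
  note I = IH[unfolded QD_def, rule_format, OF x(2) y(2)]
  note ab = rel_AB_q[OF R x(2) y(2) q la] and dc = rel_DC_q[OF R x(2) y(2) q la]
  show "op_mult (Suc N) (monodromy q eta (Suc N) la (Suc 0) (Suc 0)) (monodromy q eta (Suc N) (la / q) 0 0) x' y'
       = op_mult (Suc N) (monodromy q eta (Suc N) la (Suc 0) 0) (monodromy q eta (Suc N) (la / q) 0 (Suc 0)) x' y'
         + (if x' = y' then alpha q eta (Suc N) la * delta eta (Suc N) (la / q) else 0)
   \<and> op_mult (Suc N) (monodromy q eta (Suc N) la 0 0) (monodromy q eta (Suc N) (la / q) (Suc 0) (Suc 0)) x' y'
       = op_mult (Suc N) (monodromy q eta (Suc N) la 0 (Suc 0)) (monodromy q eta (Suc N) (la / q) (Suc 0) 0) x' y'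
         + (if x' = y' then alpha q eta (Suc N) la * delta eta (Suc N) (la / q) else 0)"
    unfolding x y prod_snoc[OF x(2) y(2)] al de
    apply (cases s; cases t; simp add: sumB sum2 Lloc_vals sq I ab dc q ad)
    apply (simp_all add: algebra_simps q bid'')
    done
qed


lemma QD_all:
  assumes "q \<noteq> 0" "q - 1/q \<noteq> 0" "la \<noteq> 0" "\<forall>n<N. eta n \<noteq> 0"
  shows "QD q eta N la"
  using assms(4)
proof (induction N)
  case 0 show ?case by (rule QD_0)
next
  case (Suc N)
  have R: "RTT q eta N (la / q) la" using RTT_all[of q "la / q" la N eta] assms Suc.prems by auto
  show ?case using QD_Suc[OF _ R assms(1,2,3)] Suc by auto
qed

lemma rep_Suc: "replicate (Suc N) True = replicate N True @ [True]"
  by (simp add: replicate_append_same)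

lemma rep_confs[simp]: "replicate N True \<in> confs N" by (simp add: confs_def)

lemma ref_right:
  assumes "x \<in> confs N"
  shows "monodromy q eta N l 0 0 x (replicate N True) = (if x = replicate N True then alpha q eta N l else 0)
       \<and> monodromy q eta N l (Suc 0) 0 x (replicate N True) = 0
       \<and> monodromy q eta N l (Suc 0) (Suc 0) x (replicate N True) = (if x = replicate N True then delta eta N l else 0)"
  using assms
proof (induction N arbitrary: x)
  case 0 thus ?case
    by (simp add: confs_0 monodromy_def aux_id_def op_id_def op_zero_def alpha_def delta_def)
next
  case (Suc N)
  obtain x' s where x: "x = x' @ [s]" "x' \<in> confs N" using Suc.prems by (rule confs_SucE)
  note I = Suc.IH[OF x(2)]
  show ?case unfolding x rep_Suc monodromy_snoc[OF x(2) rep_confs]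
    using I by (cases s) (auto simp: Lloc_vals alpha_def delta_def)
qed

lemma ref_left:
  assumes "y \<in> confs N"
  shows "monodromy q eta N l 0 0 (replicate N True) y = (if y = replicate N True then alpha q eta N l else 0)
       \<and> monodromy q eta N l 0 (Suc 0) (replicate N True) y = 0
       \<and> monodromy q eta N l (Suc 0) (Suc 0) (replicate N True) y = (if y = replicate N True then delta eta N l else 0)"
  using assms
proof (induction N arbitrary: y)
  case 0 thus ?case
    by (simp add: confs_0 monodromy_def aux_id_def op_id_def op_zero_def alpha_def delta_def)
next
  case (Suc N)
  obtain y' s where y: "y = y' @ [s]" "y' \<in> confs N" using Suc.prems by (rule confs_SucE)
  note I = Suc.IH[OF y(2)]
  show ?case unfolding y rep_Suc monodromy_snoc[OF rep_confs y(2)]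
    using I by (cases s) (auto simp: Lloc_vals alpha_def delta_def)
qed

lemma cont_br: "z \<noteq> 0 \<Longrightarrow> isCont br z"
  unfolding br_def by (intro continuous_intros) auto

lemma isCont_ifc: "isCont f a \<Longrightarrow> isCont g a \<Longrightarrow> isCont (\<lambda>l. if P then f l else g l) a"
  by (cases P) auto

lemma cont_Lloc:
  assumes "l0 \<noteq> 0" "e \<noteq> 0" "q \<noteq> 0"
  shows "isCont (\<lambda>l. Lloc q (l / e) i a s t) l0"
proof -
  have c1: "isCont (\<lambda>l. x_plus q (l / e)) l0" "isCont (\<lambda>l. x_minus q (l / e)) l0"
    unfolding x_plus_def x_minus_def using assms
    by (intro continuous_intros; auto)+
  have e: "(\<lambda>l. Lloc q (l / e) i a s t) = (\<lambda>l. if i = 0 \<and> a = 0 then x_plus q (l / e) * loc_id s t + x_minus q (l / e) * sigma_z s t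
     else if i = 0 \<and> a = 1 then (q - 1 / q) * sigma_minus s t
     else if i = 1 \<and> a = 0 then (q - 1 / q) * sigma_plus s t
     else x_plus q (l / e) * loc_id s t - x_minus q (l / e) * sigma_z s t)"
    by (rule ext) (simp add: Lloc_def)
  show ?thesis unfolding e
    by (intro isCont_ifc continuous_intros c1)
qed

lemma cont_mono:
  assumes "l0 \<noteq> 0" "q \<noteq> 0" "\<forall>n<N. eta n \<noteq> 0" "x \<in> confs N" "y \<in> confs N"
  shows "isCont (\<lambda>l. monodromy q eta N l i j x y) l0"
  using assms(3-5)
proof (induction N arbitrary: x y i j)
  case 0 thus ?case by (simp add: monodromy_def aux_id_def)
next
  case (Suc N)
  obtain x' s where x: "x = x' @ [s]" "x' \<in> confs N" using Suc.prems by (blast elim: confs_SucE)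
  obtain y' t where y: "y = y' @ [t]" "y' \<in> confs N" using Suc.prems by (blast elim: confs_SucE)
  have e: "eta N \<noteq> 0" using Suc.prems by auto
  show ?case unfolding x y monodromy_snoc[OF x(2) y(2)]
    using Suc.IH[OF _ x(2) y(2)] Suc.prems cont_Lloc[OF assms(1) e assms(2)]
    by (intro continuous_intros) auto
qed

lemma cont_zero:
  fixes g :: "complex \<Rightarrow> complex"
  assumes "isCont g a" "finite F" "\<And>z. z \<notin> F \<Longrightarrow> g z = 0"
  shows "g a = 0"
proof -
  have "open (UNIV - (F - {a}))" using assms(2) by (intro open_Diff finite_imp_closed) auto
  hence "eventually (\<lambda>y. y \<in> (UNIV - (F - {a})) - {a}) (at a)"
    by (rule eventually_at_in_open) auto
  hence "eventually (\<lambda>y. g y = 0) (at a)"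
    by (rule eventually_mono) (auto intro: assms(3))
  hence "(g \<longlongrightarrow> 0) (at a)" by (rule tendsto_eventually)
  moreover have "(g \<longlongrightarrow> g a) (at a)" using assms(1) by (simp add: isCont_def)
  ultimately show ?thesis using tendsto_unique[OF at_neq_bot] by blast
qed


lemma opB_eq: "opB q eta N l = monodromy q eta N l 0 (Suc 0)" by (simp add: opB_def)
lemma opC_eq: "opC q eta N l = monodromy q eta N l (Suc 0) 0" by (simp add: opC_def)

lemma op_vec_mult: "op_vec N (op_mult N X Y) w x = op_vec N X (op_vec N Y w) x"
proof -
  have "op_vec N (op_mult N X Y) w x = (\<Sum>y\<in>confs N. \<Sum>z\<in>confs N. X x z * Y z y * w y)"
    by (simp add: op_vec_def op_mult_def sum_distrib_right)
  also have "\<dots> = (\<Sum>z\<in>confs N. \<Sum>y\<in>confs N. X x z * Y z y * w y)" by (rule sum.swap)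
  also have "\<dots> = op_vec N X (op_vec N Y w) x"
    by (simp add: op_vec_def sum_distrib_left mult.assoc)
  finally show ?thesis .
qed

lemma covec_mult: "covec_op N v (op_mult N X Y) y = covec_op N (covec_op N v X) Y y"
proof -
  have "covec_op N v (op_mult N X Y) y = (\<Sum>x\<in>confs N. \<Sum>z\<in>confs N. v x * X x z * Y z y)"
    by (simp add: covec_op_def op_mult_def sum_distrib_left mult.assoc)
  also have "\<dots> = (\<Sum>z\<in>confs N. \<Sum>x\<in>confs N. v x * X x z * Y z y)" by (rule sum.swap)
  also have "\<dots> = covec_op N (covec_op N v X) Y y"
    by (simp add: covec_op_def sum_distrib_right)
  finally show ?thesis .
qed

lemma op_vec_cong: "(\<And>y. y \<in> confs N \<Longrightarrow> w y = w' y) \<Longrightarrow> op_vec N X w x = op_vec N X w' x"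
  unfolding op_vec_def by (rule sum.cong) auto

lemma covec_cong: "(\<And>x. x \<in> confs N \<Longrightarrow> v x = v' x) \<Longrightarrow> covec_op N v X y = covec_op N v' X y"
  unfolding covec_op_def by (rule sum.cong) auto

lemma op_vec_div: "op_vec N X (\<lambda>x. w x / c) x = op_vec N X w x / c"
  by (simp add: op_vec_def sum_divide_distrib)

lemma covec_div: "covec_op N (\<lambda>x. v x / c) X y = covec_op N v X y / c"
  by (simp add: covec_op_def sum_divide_distrib)

lemma op_vec_scal: "op_vec N X (\<lambda>x. c * w x) x = c * op_vec N X w x"
  by (simp add: op_vec_def sum_distrib_left ac_simps)

lemma covec_scal: "covec_op N (\<lambda>x. c * v x) X y = c * covec_op N v X y"
  by (simp add: covec_op_def sum_distrib_left ac_simps)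

lemma pairing_assoc: "pairing N (covec_op N v X) w = pairing N v (op_vec N X w)"
proof -
  have "pairing N (covec_op N v X) w = (\<Sum>y\<in>confs N. \<Sum>x\<in>confs N. v x * X x y * w y)"
    by (simp add: pairing_def covec_op_def sum_distrib_right)
  also have "\<dots> = (\<Sum>x\<in>confs N. \<Sum>y\<in>confs N. v x * X x y * w y)" by (rule sum.swap)
  also have "\<dots> = pairing N v (op_vec N X w)"
    by (simp add: pairing_def op_vec_def sum_distrib_left mult.assoc)
  finally show ?thesis .
qed

lemma lift_vec3:
  assumes "\<And>y. y \<in> confs N \<Longrightarrow> a * M1 x y + b * M2 x y = c * M3 x y"
  shows "a * op_vec N M1 w x + b * op_vec N M2 w x = c * op_vec N M3 w x"
proof -
  have "a * op_vec N M1 w x + b * op_vec N M2 w x = (\<Sum>y\<in>confs N. (a * M1 x y + b * M2 x y) * w y)"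
    by (simp add: op_vec_def sum_distrib_left sum.distrib algebra_simps)
  also have "\<dots> = (\<Sum>y\<in>confs N. (c * M3 x y) * w y)" using assms by (intro sum.cong) auto
  also have "\<dots> = c * op_vec N M3 w x" by (simp add: op_vec_def sum_distrib_left algebra_simps)
  finally show ?thesis .
qed

lemma lift_covec3:
  assumes "\<And>x. x \<in> confs N \<Longrightarrow> a * M1 x y = b * M2 x y + c * M3 x y"
  shows "a * covec_op N v M1 y = b * covec_op N v M2 y + c * covec_op N v M3 y"
proof -
  have "a * covec_op N v M1 y = (\<Sum>x\<in>confs N. v x * (a * M1 x y))"
    by (simp add: covec_op_def sum_distrib_left algebra_simps)
  also have "\<dots> = (\<Sum>x\<in>confs N. v x * (b * M2 x y + c * M3 x y))" using assms by (intro sum.cong) auto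
  also have "\<dots> = b * covec_op N v M2 y + c * covec_op N v M3 y"
    by (simp add: covec_op_def sum_distrib_left sum.distrib algebra_simps)
  finally show ?thesis .
qed

lemma br_zero_iff: "z \<noteq> 0 \<Longrightarrow> br z = 0 \<longleftrightarrow> z = 1 \<or> z = -1"
proof -
  assume z: "z \<noteq> 0"
  have "br z = 0 \<longleftrightarrow> z * z = 1" using z by (simp add: br_def field_simps)
  also have "\<dots> \<longleftrightarrow> (z - 1) * (z + 1) = 0" by (simp add: algebra_simps)
  also have "\<dots> \<longleftrightarrow> z = 1 \<or> z = -1" by (auto simp: add_eq_0_iff2)
  finally show ?thesis .
qed

lemma cont_br_lin: "e \<noteq> 0 \<Longrightarrow> c \<noteq> 0 \<Longrightarrow> l0 \<noteq> 0 \<Longrightarrow> isCont (\<lambda>l. br (l / e * c)) l0"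
  unfolding br_def by (intro continuous_intros) auto

definition evR :: "complex \<Rightarrow> (nat \<Rightarrow> complex) \<Rightarrow> nat \<Rightarrow> bool list \<Rightarrow> nat \<Rightarrow> complex \<Rightarrow> complex" where
  "evR q eta N h k l = (\<Prod>n<N. br (l / eta n * (if h ! n \<and> k \<le> n then q else 1)))"

definition evL :: "complex \<Rightarrow> (nat \<Rightarrow> complex) \<Rightarrow> nat \<Rightarrow> bool list \<Rightarrow> nat \<Rightarrow> complex \<Rightarrow> complex" where
  "evL q eta N h k l = (\<Prod>n<N. br (l / eta n * (if h ! n \<and> n < k then q else 1)))"

lemma prod_swap_factor:
  fixes N k :: nat and f g :: "nat \<Rightarrow> 'a::comm_ring_1"
  assumes "k < N" "\<And>n. n < N \<Longrightarrow> n \<noteq> k \<Longrightarrow> f n = g n" "f k * a = g k * b"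
  shows "(\<Prod>n<N. f n) * a = (\<Prod>n<N. g n) * b"
proof -
  have k: "k \<in> {..<N}" using assms by simp
  have eq: "(\<Prod>n\<in>{..<N} - {k}. f n) = (\<Prod>n\<in>{..<N} - {k}. g n)"
    using assms(2) by (intro prod.cong) auto
  have rf: "prod f {..<N} = f k * prod f ({..<N} - {k})" by (rule prod.remove) (use k in auto)
  have rg: "prod g {..<N} = g k * prod g ({..<N} - {k})" by (rule prod.remove) (use k in auto)
  have "(\<Prod>n<N. f n) * a = (f k * a) * (\<Prod>n\<in>{..<N} - {k}. f n)"
    unfolding rf by (simp add: ac_simps)
  also have "\<dots> = (g k * b) * (\<Prod>n\<in>{..<N} - {k}. g n)" using assms(3) eq by simp
  also have "\<dots> = (\<Prod>n<N. g n) * b"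
    unfolding rg by (simp add: ac_simps)
  finally show ?thesis .
qed

lemma cont_evR: "q \<noteq> 0 \<Longrightarrow> \<forall>n<N. eta n \<noteq> 0 \<Longrightarrow> l0 \<noteq> 0 \<Longrightarrow> isCont (evR q eta N h k) l0"
  unfolding evR_def by (intro continuous_intros cont_br_lin) auto

lemma cont_evL: "q \<noteq> 0 \<Longrightarrow> \<forall>n<N. eta n \<noteq> 0 \<Longrightarrow> l0 \<noteq> 0 \<Longrightarrow> isCont (evL q eta N h k) l0"
  unfolding evL_def by (intro continuous_intros cont_br_lin) auto

lemma cont_op_vec: "q \<noteq> 0 \<Longrightarrow> \<forall>n<N. eta n \<noteq> 0 \<Longrightarrow> l0 \<noteq> 0 \<Longrightarrow> x \<in> confs N \<Longrightarrow>
  isCont (\<lambda>l. op_vec N (monodromy q eta N l i j) w x) l0"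
  unfolding op_vec_def by (intro continuous_intros cont_mono) auto

lemma cont_covec: "q \<noteq> 0 \<Longrightarrow> \<forall>n<N. eta n \<noteq> 0 \<Longrightarrow> l0 \<noteq> 0 \<Longrightarrow> y \<in> confs N \<Longrightarrow>
  isCont (\<lambda>l. covec_op N v (monodromy q eta N l i j) y) l0"
  unfolding covec_op_def by (intro continuous_intros cont_mono) auto

lemma extend_eigen:
  fixes f g :: "complex \<Rightarrow> complex"
  assumes "isCont f l0" "isCont g l0" "e \<noteq> 0"
    and "\<And>l. l \<noteq> 0 \<Longrightarrow> br (l / e) \<noteq> 0 \<Longrightarrow> f l = g l"
  shows "f l0 = g l0"
proof -
  have c: "isCont (\<lambda>l. f l - g l) l0" using assms(1,2) by (intro continuous_intros)
  have z: "f l - g l = 0" if l: "l \<notin> {0, e, -e}" for l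
  proof -
    have "l / e \<noteq> 0" "l / e \<noteq> 1" "l / e \<noteq> -1" using assms(3) l by (auto simp: field_simps)
    hence "br (l / e) \<noteq> 0" by (simp add: br_zero_iff)
    thus "f l - g l = 0" using assms(4) l by auto
  qed
  have "f l0 - g l0 = 0" using cont_zero[where g="\<lambda>l. f l - g l" and a=l0 and F="{0, e, -e}"] c z by auto
  thus ?thesis by simp
qed


definition rs :: "complex \<Rightarrow> (nat \<Rightarrow> complex) \<Rightarrow> nat \<Rightarrow> bool list \<Rightarrow> nat \<Rightarrow> qvec" where
  "rs q eta N h k = foldr (\<lambda>n w. if h ! n then (\<lambda>x. op_vec N (opB q eta N (eta n)) w x / a_fun q eta N (eta n)) else w)
       [k..<N] (\<lambda>x. ref_state N x / norm_sov eta N)"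

definition ls :: "complex \<Rightarrow> (nat \<Rightarrow> complex) \<Rightarrow> nat \<Rightarrow> bool list \<Rightarrow> nat \<Rightarrow> qvec" where
  "ls q eta N h k = fold (\<lambda>n v. if h ! n then (\<lambda>y. covec_op N v (opC q eta N (eta n)) y / d_fun eta N (eta n / q)) else v)
       [0..<k] (\<lambda>x. ref_state N x / norm_sov eta N)"

lemma right_rs: "right_sov q eta N h = rs q eta N h 0" by (simp add: rs_def right_sov_def)
lemma left_ls: "left_sov q eta N h = ls q eta N h N" by (simp add: ls_def left_sov_def)
lemma rs_N: "rs q eta N h N = (\<lambda>x. ref_state N x / norm_sov eta N)" by (simp add: rs_def)
lemma ls_0: "ls q eta N h 0 = (\<lambda>x. ref_state N x / norm_sov eta N)" by (simp add: ls_def)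
lemma rs_step: "k < N \<Longrightarrow> rs q eta N h k = (if h ! k then (\<lambda>x. op_vec N (opB q eta N (eta k)) (rs q eta N h (Suc k)) x / a_fun q eta N (eta k)) else rs q eta N h (Suc k))"
  by (simp add: rs_def upt_conv_Cons)
lemma ls_Suc: "ls q eta N h (Suc k) = (if h ! k then (\<lambda>y. covec_op N (ls q eta N h k) (opC q eta N (eta k)) y / d_fun eta N (eta k / q)) else ls q eta N h k)"
  by (simp add: ls_def)

lemma op_vec_ref: "op_vec N X (\<lambda>y. ref_state N y / c) x = X x (replicate N True) / c"
proof -
  have "op_vec N X (ref_state N) x = X x (replicate N True)"
    by (simp add: op_vec_def ref_state_def if_distrib cong: if_cong)
  thus ?thesis by (simp add: op_vec_div)
qed

lemma covec_ref: "covec_op N (\<lambda>y. ref_state N y / c) X y = X (replicate N True) y / c"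
proof -
  have "covec_op N (ref_state N) X y = (\<Sum>x\<in>confs N. if x = replicate N True then X x y else 0)"
    unfolding covec_op_def ref_state_def by (intro sum.cong) auto
  also have "\<dots> = X (replicate N True) y" by (simp add: sum.delta)
  finally have "covec_op N (ref_state N) X y = X (replicate N True) y" .
  thus ?thesis by (simp add: covec_div)
qed

lemma eigen_right:
  assumes q: "q \<noteq> 0" "q - 1/q \<noteq> 0" and e: "\<forall>n<N. eta n \<noteq> 0" and k: "k \<le> N"
  shows "\<forall>(l::complex) (x::bool list). l \<noteq> 0 \<longrightarrow> x \<in> confs N \<longrightarrow>
    op_vec N (monodromy q eta N l (Suc 0) (Suc 0)) (rs q eta N h k) x = evR q eta N h k l * rs q eta N h k x"
  using k
proof (induction k rule: inc_induct)
  case base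
  show ?case
  proof (intro allI impI)
    fix l :: complex and x :: "bool list" assume l: "l \<noteq> 0" and x: "x \<in> confs N"
    show "op_vec N (monodromy q eta N l (Suc 0) (Suc 0)) (rs q eta N h N) x = evR q eta N h N l * rs q eta N h N x"
      unfolding rs_N op_vec_ref using ref_right[OF x, of q eta l]
      by (simp add: evR_def delta_def ref_state_def)
  qed
next
  case (step n)
  note IH = step.IH
  have nN: "n < N" using step.hyps by simp
  show ?case
  proof (cases "h ! n")
    case False
    have cond: "(h ! m \<and> n \<le> m) = (h ! m \<and> Suc n \<le> m)" for m
      using False by (cases "m = n") (auto simp: Suc_le_eq)
    have ev: "evR q eta N h n l = evR q eta N h (Suc n) l" for l
      unfolding evR_def cond ..
    show ?thesis using IH False nN by (simp add: rs_step ev)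
  next
    case True
    define w where "w = rs q eta N h (Suc n)"
    define B where "B = monodromy q eta N (eta n) 0 (Suc 0)"
    define an where "an = a_fun q eta N (eta n)"
    have rsn: "rs q eta N h n = (\<lambda>x. op_vec N B w x / an)"
      using True nN by (simp add: rs_step w_def B_def an_def opB_eq)
    have en: "eta n \<noteq> 0" using e nN by auto
    show ?thesis
    proof (intro allI impI)
      fix l0 :: complex and x :: "bool list" assume l0: "l0 \<noteq> 0" and x: "x \<in> confs N"
      have main: "op_vec N (monodromy q eta N l (Suc 0) (Suc 0)) (op_vec N B w) x = evR q eta N h n l * op_vec N B w x"
        if l: "l \<noteq> 0" "br (l / eta n) \<noteq> 0" for l
      proof -
        have R: "RTT q eta N l (eta n)" using RTT_all[of q l "eta n" N eta] q l en e by auto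
        have rel: "br (l / eta n) * op_vec N (op_mult N (monodromy q eta N l (Suc 0) (Suc 0)) B) w x
          + (q - 1/q) * op_vec N (op_mult N (monodromy q eta N l 0 (Suc 0)) (monodromy q eta N (eta n) (Suc 0) (Suc 0))) w x
          = br (l / eta n * q) * op_vec N (op_mult N B (monodromy q eta N l (Suc 0) (Suc 0))) w x"
          unfolding B_def by (rule lift_vec3) (rule rel_DB[OF R x])
        have z0: "evR q eta N h (Suc n) (eta n) = 0"
          unfolding evR_def using nN en by (intro prod_zero) (auto intro!: bexI[of _ n] simp: br_one)
        have t2: "op_vec N (op_mult N (monodromy q eta N l 0 (Suc 0)) (monodromy q eta N (eta n) (Suc 0) (Suc 0))) w x = 0"
        proof -
          have "op_vec N (op_mult N (monodromy q eta N l 0 (Suc 0)) (monodromy q eta N (eta n) (Suc 0) (Suc 0))) w x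
            = op_vec N (monodromy q eta N l 0 (Suc 0)) (\<lambda>y. 0 * w y) x"
            unfolding op_vec_mult using IH en z0 by (intro op_vec_cong) (simp add: w_def)
          thus ?thesis by (simp add: op_vec_def)
        qed
        have t3: "op_vec N (op_mult N B (monodromy q eta N l (Suc 0) (Suc 0))) w x
            = evR q eta N h (Suc n) l * op_vec N B w x"
        proof -
          have "op_vec N (op_mult N B (monodromy q eta N l (Suc 0) (Suc 0))) w x
            = op_vec N B (\<lambda>y. evR q eta N h (Suc n) l * w y) x"
            unfolding op_vec_mult using IH l by (intro op_vec_cong) (simp add: w_def)
          thus ?thesis by (simp add: op_vec_scal)
        qed
        have pf: "evR q eta N h n l * br (l / eta n) = evR q eta N h (Suc n) l * br (l / eta n * q)"
          unfolding evR_def by (rule prod_swap_factor[OF nN]) (auto simp: True le_Suc_eq ac_simps)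
        have "br (l / eta n) * op_vec N (monodromy q eta N l (Suc 0) (Suc 0)) (op_vec N B w) x
            = br (l / eta n) * (evR q eta N h n l * op_vec N B w x)"
          using rel t2 t3 pf by (simp add: op_vec_mult ac_simps)
        thus ?thesis using l by simp
      qed
      have "op_vec N (monodromy q eta N l0 (Suc 0) (Suc 0)) (op_vec N B w) x = evR q eta N h n l0 * op_vec N B w x"
        by (rule extend_eigen[where f="\<lambda>l. op_vec N (monodromy q eta N l (Suc 0) (Suc 0)) (op_vec N B w) x"
              and g="\<lambda>l. evR q eta N h n l * op_vec N B w x" and e="eta n", OF _ _ en])
           (use q e l0 x main in \<open>auto intro!: continuous_intros cont_op_vec cont_evR\<close>)
      thus "op_vec N (monodromy q eta N l0 (Suc 0) (Suc 0)) (rs q eta N h n) x = evR q eta N h n l0 * rs q eta N h n x"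
        unfolding rsn op_vec_div by simp
    qed
  qed
qed


lemma eigen_left:
  assumes q: "q \<noteq> 0" "q - 1/q \<noteq> 0" and e: "\<forall>n<N. eta n \<noteq> 0"
  shows "k \<le> N \<Longrightarrow> \<forall>(l::complex) (y::bool list). l \<noteq> 0 \<longrightarrow> y \<in> confs N \<longrightarrow>
    covec_op N (ls q eta N h k) (monodromy q eta N l (Suc 0) (Suc 0)) y = evL q eta N h k l * ls q eta N h k y"
proof (induction k)
  case 0
  show ?case
  proof (intro allI impI)
    fix l :: complex and y :: "bool list" assume l: "l \<noteq> 0" and y: "y \<in> confs N"
    show "covec_op N (ls q eta N h 0) (monodromy q eta N l (Suc 0) (Suc 0)) y = evL q eta N h 0 l * ls q eta N h 0 y"
      unfolding ls_0 covec_ref using ref_left[OF y, of q eta l]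
      by (simp add: evL_def delta_def ref_state_def)
  qed
next
  case (Suc n)
  have nN: "n < N" using Suc.prems by simp
  note IH = Suc.IH[OF less_imp_le[OF nN]]
  show ?case
  proof (cases "h ! n")
    case False
    have cond: "(h ! m \<and> m < n) = (h ! m \<and> m < Suc n)" for m
      using False by (cases "m = n") auto
    have ev: "evL q eta N h (Suc n) l = evL q eta N h n l" for l
      unfolding evL_def cond ..
    show ?thesis using IH False by (simp add: ls_Suc ev)
  next
    case True
    define v where "v = ls q eta N h n"
    define C where "C = monodromy q eta N (eta n) (Suc 0) 0"
    define dn where "dn = d_fun eta N (eta n / q)"
    have lsn: "ls q eta N h (Suc n) = (\<lambda>y. covec_op N v C y / dn)"
      using True by (simp add: ls_Suc v_def C_def dn_def opC_eq)
    have en: "eta n \<noteq> 0" using e nN by auto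
    show ?thesis
    proof (intro allI impI)
      fix l0 :: complex and y :: "bool list" assume l0: "l0 \<noteq> 0" and y: "y \<in> confs N"
      have main: "covec_op N (covec_op N v C) (monodromy q eta N l (Suc 0) (Suc 0)) y = evL q eta N h (Suc n) l * covec_op N v C y"
        if l: "l \<noteq> 0" "br (l / eta n) \<noteq> 0" for l
      proof -
        have R: "RTT q eta N l (eta n)" using RTT_all[of q l "eta n" N eta] q l en e by auto
        have rel: "br (l / eta n * q) * covec_op N v (op_mult N (monodromy q eta N l (Suc 0) (Suc 0)) C) y
          = br (l / eta n) * covec_op N v (op_mult N C (monodromy q eta N l (Suc 0) (Suc 0))) y
          + (q - 1/q) * covec_op N v (op_mult N (monodromy q eta N (eta n) (Suc 0) (Suc 0)) (monodromy q eta N l (Suc 0) 0)) y"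
          unfolding C_def by (rule lift_covec3) (rule rel_CD[OF R _ y])
        have z0: "evL q eta N h n (eta n) = 0"
          unfolding evL_def using nN en by (intro prod_zero) (auto intro!: bexI[of _ n] simp: br_one)
        have t2: "covec_op N v (op_mult N (monodromy q eta N (eta n) (Suc 0) (Suc 0)) (monodromy q eta N l (Suc 0) 0)) y = 0"
        proof -
          have "covec_op N v (op_mult N (monodromy q eta N (eta n) (Suc 0) (Suc 0)) (monodromy q eta N l (Suc 0) 0)) y
            = covec_op N (\<lambda>x. 0 * v x) (monodromy q eta N l (Suc 0) 0) y"
            unfolding covec_mult using IH en z0 by (intro covec_cong) (simp add: v_def)
          thus ?thesis by (simp add: covec_op_def)
        qed
        have t3: "covec_op N v (op_mult N (monodromy q eta N l (Suc 0) (Suc 0)) C) y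
            = evL q eta N h n l * covec_op N v C y"
        proof -
          have "covec_op N v (op_mult N (monodromy q eta N l (Suc 0) (Suc 0)) C) y
            = covec_op N (\<lambda>x. evL q eta N h n l * v x) C y"
            unfolding covec_mult using IH l by (intro covec_cong) (simp add: v_def)
          thus ?thesis by (simp add: covec_scal)
        qed
        have pf: "evL q eta N h (Suc n) l * br (l / eta n) = evL q eta N h n l * br (l / eta n * q)"
          unfolding evL_def by (rule prod_swap_factor[OF nN]) (auto simp: True less_Suc_eq ac_simps)
        have "br (l / eta n) * covec_op N (covec_op N v C) (monodromy q eta N l (Suc 0) (Suc 0)) y
            = br (l / eta n) * (evL q eta N h (Suc n) l * covec_op N v C y)"
          using rel t2 t3 pf by (simp add: covec_mult ac_simps)
        thus ?thesis using l by simp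
      qed
      have "covec_op N (covec_op N v C) (monodromy q eta N l0 (Suc 0) (Suc 0)) y = evL q eta N h (Suc n) l0 * covec_op N v C y"
        by (rule extend_eigen[where f="\<lambda>l. covec_op N (covec_op N v C) (monodromy q eta N l (Suc 0) (Suc 0)) y"
              and g="\<lambda>l. evL q eta N h (Suc n) l * covec_op N v C y" and e="eta n", OF _ _ en])
           (use q e l0 y main in \<open>auto intro!: continuous_intros cont_covec cont_evL\<close>)
      thus "covec_op N (ls q eta N h (Suc n)) (monodromy q eta N l0 (Suc 0) (Suc 0)) y = evL q eta N h (Suc n) l0 * ls q eta N h (Suc n) y"
        unfolding lsn covec_div by simp
    qed
  qed
qed


definition ev :: "complex \<Rightarrow> (nat \<Rightarrow> complex) \<Rightarrow> nat \<Rightarrow> bool list \<Rightarrow> complex \<Rightarrow> complex" where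
  "ev q eta N h l = (\<Prod>n<N. br (l / eta n * (if h ! n then q else 1)))"

lemma evR_0: "evR q eta N h 0 l = ev q eta N h l" by (simp add: evR_def ev_def)
lemma evL_N: "evL q eta N h N l = ev q eta N h l" unfolding evL_def ev_def by (intro prod.cong) auto

lemma pairing_eigen:
  assumes "q \<noteq> 0" "q - 1/q \<noteq> 0" "\<forall>n<N. eta n \<noteq> 0" "l \<noteq> 0"
  shows "ev q eta N h l * pairing N (left_sov q eta N h) (right_sov q eta N h')
       = ev q eta N h' l * pairing N (left_sov q eta N h) (right_sov q eta N h')"
proof -
  let ?D = "monodromy q eta N l (Suc 0) (Suc 0)"
  have L: "covec_op N (ls q eta N h N) ?D y = ev q eta N h l * ls q eta N h N y" if "y \<in> confs N" for y
    using eigen_left[OF assms(1-3), of N h] assms(4) that by (simp add: evL_N)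
  have R: "op_vec N ?D (rs q eta N h' 0) x = ev q eta N h' l * rs q eta N h' 0 x" if "x \<in> confs N" for x
    using eigen_right[OF assms(1-3), of 0 h'] assms(4) that by (simp add: evR_0)
  have "ev q eta N h l * pairing N (ls q eta N h N) (rs q eta N h' 0) = pairing N (covec_op N (ls q eta N h N) ?D) (rs q eta N h' 0)"
    unfolding pairing_def sum_distrib_left using L by (intro sum.cong) auto
  also have "\<dots> = pairing N (ls q eta N h N) (op_vec N ?D (rs q eta N h' 0))" by (rule pairing_assoc)
  also have "\<dots> = ev q eta N h' l * pairing N (ls q eta N h N) (rs q eta N h' 0)"
    unfolding pairing_def sum_distrib_left using R by (intro sum.cong) auto
  finally show ?thesis by (simp add: left_ls right_rs)
qed

lemma br_recip: "br (1 / z) = - br z" by (simp add: br_def)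

lemma generic_norm:
  assumes "norm_sov eta N \<noteq> 0" "a < N" "b < N" "a \<noteq> b"
  shows "br (eta a / eta b) \<noteq> 0"
proof -
  have gen: "br (eta i / eta j) \<noteq> 0" if ij: "j < i" "i < N" for i j
  proof
    assume z: "br (eta i / eta j) = 0"
    have z2: "eta i / eta j - eta j / eta i = 0" using z by (simp add: br_def)
    have P0: "(\<Prod>k\<in>{j<..<N}. csqrt (eta k / eta j - eta j / eta k)) = 0"
      by (rule prod_zero) (use ij z2 in \<open>auto intro!: bexI[of _ i]\<close>)
    have "norm_sov eta N = 0" unfolding norm_sov_def
      apply (rule prod_zero, simp)
      apply (rule bexI[of _ j])
       apply (rule P0)
      using ij by simp
    thus False using assms(1) by simp
  qed
  show ?thesis
  proof (cases "b < a")
    case True thus ?thesis using gen assms by auto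
  next
    case False
    hence "a < b" using assms by auto
    hence "br (eta b / eta a) \<noteq> 0" using gen assms by auto
    moreover have "eta a / eta b = 1 / (eta b / eta a)" by simp
    ultimately show ?thesis by (simp only: br_recip) simp
  qed
qed

lemma generic_a:
  assumes "a_fun q eta N (eta n) \<noteq> 0" "m < N"
  shows "br (eta n / eta m * q) \<noteq> 0"
proof
  assume "br (eta n / eta m * q) = 0"
  hence "eta n * q / eta m - eta m / (eta n * q) = 0" by (simp add: br_def field_simps)
  hence "a_fun q eta N (eta n) = 0" unfolding a_fun_def using assms(2) by (auto intro!: bexI[of _ m])
  thus False using assms(1) by simp
qed


lemma rs_agree: "(\<And>j. k \<le> j \<Longrightarrow> j < N \<Longrightarrow> h ! j = h' ! j) \<Longrightarrow> rs q eta N h k = rs q eta N h' k"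
  unfolding rs_def by (intro foldr_cong) auto

lemma ls_agree: "(\<And>j. j < k \<Longrightarrow> h ! j = h' ! j) \<Longrightarrow> ls q eta N h k = ls q eta N h' k"
  unfolding ls_def by (intro fold_cong) auto

lemma rs_skip:
  assumes "k \<le> k'" "k' \<le> N" "\<And>j. k \<le> j \<Longrightarrow> j < k' \<Longrightarrow> \<not> h ! j"
  shows "rs q eta N h k = rs q eta N h k'"
  using assms(1,3)
proof (induction k rule: inc_induct)
  case base show ?case ..
next
  case (step n)
  have "rs q eta N h n = rs q eta N h (Suc n)"
    using rs_step[of n N q eta h] step.hyps step.prems assms(2) by auto
  also have "\<dots> = rs q eta N h k'" using step.IH step.prems step.hyps by auto
  finally show ?case .
qed

lemma covec_op_cong2:
  assumes "\<And>x. x \<in> confs N \<Longrightarrow> M x y = M' x y"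
  shows "covec_op N v M y = covec_op N v M' y"
  unfolding covec_op_def using assms by (intro sum.cong) auto

lemma pairing_cong:
  assumes "\<And>x. x \<in> confs N \<Longrightarrow> v x = v' x" "\<And>x. x \<in> confs N \<Longrightarrow> w x = w' x"
  shows "pairing N v w = pairing N v' w'"
  unfolding pairing_def using assms by (intro sum.cong) auto

lemma F1:
  assumes "length h = N" "m < N" "h ! m" "\<And>j. j < m \<Longrightarrow> \<not> h ! j"
  shows "rs q eta N h 0 = (\<lambda>x. op_vec N (monodromy q eta N (eta m) 0 (Suc 0)) (rs q eta N (h[m := False]) 0) x / a_fun q eta N (eta m))"
proof -
  have "rs q eta N h 0 = rs q eta N h m" by (rule rs_skip) (use assms in auto)
  also have "\<dots> = (\<lambda>x. op_vec N (monodromy q eta N (eta m) 0 (Suc 0)) (rs q eta N h (Suc m)) x / a_fun q eta N (eta m))"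
    using rs_step[OF assms(2), of q eta h] assms(3) by (simp add: opB_eq)
  also have "rs q eta N h (Suc m) = rs q eta N (h[m := False]) (Suc m)"
    by (rule rs_agree) (use assms in auto)
  also have "\<dots> = rs q eta N (h[m := False]) 0"
    by (rule rs_skip[symmetric]) (use assms in \<open>auto simp: nth_list_update\<close>)
  finally show ?thesis .
qed

lemma F2:
  assumes q: "q \<noteq> 0" "q - 1/q \<noteq> 0" and e: "\<forall>n<N. eta n \<noteq> 0" and wa: "\<forall>n<N. a_fun q eta N (eta n) \<noteq> 0"
    and h: "length h = N" "m < N" "h ! m"
  shows "\<forall>y\<in>confs N. ls q eta N h N y = covec_op N (ls q eta N (h[m := False]) N) (monodromy q eta N (eta m) (Suc 0) 0) y / d_fun eta N (eta m / q)"
proof -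
  let ?hm = "h[m := False]"
  let ?C = "\<lambda>n. monodromy q eta N (eta n) (Suc 0) 0"
  let ?d = "\<lambda>n. d_fun eta N (eta n / q)"
  have gen: "\<forall>y\<in>confs N. ls q eta N h k y = covec_op N (ls q eta N ?hm k) (?C m) y / ?d m"
    if kk: "Suc m \<le> k" "k \<le> N" for k
  using kk(1)
  proof (induction k rule: dec_induct)
    case base
    have l1: "ls q eta N h (Suc m) = (\<lambda>y. covec_op N (ls q eta N h m) (?C m) y / ?d m)"
      using h by (simp add: ls_Suc opC_eq)
    have l2: "ls q eta N h m = ls q eta N ?hm m" by (rule ls_agree) (use h in auto)
    have l3: "ls q eta N ?hm (Suc m) = ls q eta N ?hm m" using h by (simp add: ls_Suc)
    show ?case unfolding l1 l2 l3 by simp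
  next
    case (step n)
    have nN: "n < N" "n \<noteq> m" using step.hyps kk by auto
    have hn: "?hm ! n = h ! n" using nN by simp
    show ?case
    proof (cases "h ! n")
      case False thus ?thesis using step.IH hn by (simp add: ls_Suc)
    next
      case True
      have comm: "op_mult N (?C m) (?C n) x y = op_mult N (?C n) (?C m) x y" if "x \<in> confs N" "y \<in> confs N" for x y
      proof -
        have R: "RTT q eta N (eta n) (eta m)" using RTT_all[of q "eta n" "eta m" N eta] q e nN h by auto
        have nz: "br (eta n / eta m * q) \<noteq> 0" using generic_a[of q eta N n m] wa nN h by auto
        from rel_CC[OF R that] nz show ?thesis by simp
      qed
      show ?thesis
      proof
        fix y assume y: "y \<in> confs N"
        have "ls q eta N h (Suc n) y = covec_op N (ls q eta N h n) (?C n) y / ?d n"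
          using True by (simp add: ls_Suc opC_eq)
        also have "covec_op N (ls q eta N h n) (?C n) y
            = covec_op N (\<lambda>z. covec_op N (ls q eta N ?hm n) (?C m) z / ?d m) (?C n) y"
          using step.IH by (intro covec_cong) auto
        also have "\<dots> = covec_op N (ls q eta N ?hm n) (op_mult N (?C m) (?C n)) y / ?d m"
          by (simp add: covec_div covec_mult)
        also have "covec_op N (ls q eta N ?hm n) (op_mult N (?C m) (?C n)) y
            = covec_op N (ls q eta N ?hm n) (op_mult N (?C n) (?C m)) y"
          using comm y by (intro covec_op_cong2) auto
        also have "\<dots> = covec_op N (covec_op N (ls q eta N ?hm n) (?C n)) (?C m) y" by (rule covec_mult)
        finally have "ls q eta N h (Suc n) y = covec_op N (\<lambda>z. covec_op N (ls q eta N ?hm n) (?C n) z / ?d n) (?C m) y / ?d m"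
          by (simp add: covec_div)
        also have "\<dots> = covec_op N (ls q eta N ?hm (Suc n)) (?C m) y / ?d m"
          using True hn by (simp add: ls_Suc opC_eq)
        finally show "ls q eta N h (Suc n) y = covec_op N (ls q eta N ?hm (Suc n)) (?C m) y / ?d m" .
      qed
    qed
  qed
  show ?thesis using gen[of N] h by simp
qed


lemma a_alpha: "\<forall>n<N. eta n \<noteq> 0 \<Longrightarrow> l \<noteq> 0 \<Longrightarrow> q \<noteq> 0 \<Longrightarrow> a_fun q eta N l = - alpha q eta N l"
  unfolding a_fun_def alpha_def br_def
  by (intro arg_cong[where f=uminus] prod.cong refl) (auto simp: field_simps)

lemma d_delta: "d_fun eta N l = delta eta N l"
  unfolding d_fun_def delta_def br_def by (intro prod.cong) auto

lemma lift_pair3: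
  assumes "\<And>x y. x \<in> confs N \<Longrightarrow> y \<in> confs N \<Longrightarrow> a * M1 x y + b * M2 x y = c * M3 x y"
  shows "a * pairing N (covec_op N L M1) R + b * pairing N (covec_op N L M2) R = c * pairing N (covec_op N L M3) R"
proof -
  have "a * pairing N (covec_op N L M1) R + b * pairing N (covec_op N L M2) R
      = (\<Sum>x\<in>confs N. L x * (a * op_vec N M1 R x + b * op_vec N M2 R x))"
    unfolding pairing_assoc by (simp add: pairing_def sum_distrib_left sum.distrib algebra_simps)
  also have "\<dots> = (\<Sum>x\<in>confs N. L x * (c * op_vec N M3 R x))"
    by (intro sum.cong refl arg_cong[where f="\<lambda>z. L _ * z"] lift_vec3 assms) auto
  also have "\<dots> = c * pairing N (covec_op N L M3) R"
    unfolding pairing_assoc by (simp add: pairing_def sum_distrib_left algebra_simps)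
  finally show ?thesis .
qed

lemma covec_scal_fun: "covec_op N (\<lambda>x. c * v x) X = (\<lambda>y. c * covec_op N v X y)"
  by (rule ext) (rule covec_scal)

lemma pairing_scal_left: "pairing N (\<lambda>x. k * v x) w = k * pairing N v w"
  by (simp add: pairing_def sum_distrib_left ac_simps)

lemma pairing_scal_right: "pairing N v (\<lambda>x. k * w x) = k * pairing N v w"
  by (simp add: pairing_def sum_distrib_left ac_simps)

lemma norm_step:
  assumes q: "q \<noteq> 0" "q - 1/q \<noteq> 0" and e: "\<forall>n<N. eta n \<noteq> 0"
    and wa: "\<forall>n<N. a_fun q eta N (eta n) \<noteq> 0" and wd: "\<forall>n<N. d_fun eta N (eta n / q) \<noteq> 0"
    and h: "length h = N" "m < N" "h ! m" "\<And>j. j < m \<Longrightarrow> \<not> h ! j"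
  shows "pairing N (left_sov q eta N h) (right_sov q eta N h) * ev q eta N (h[m := False]) (eta m / q)
       = - ev q eta N h (eta m) * pairing N (left_sov q eta N (h[m := False])) (right_sov q eta N (h[m := False]))"
proof -
  let ?hm = "h[m := False]"
  define L where "L = ls q eta N h N"
  define Lm where "Lm = ls q eta N ?hm N"
  define R where "R = rs q eta N h 0"
  define Rm where "Rm = rs q eta N ?hm 0"
  define c1 where "c1 = eta m"
  define c2 where "c2 = eta m / q"
  let ?T = "monodromy q eta N"
  define am where "am = a_fun q eta N c1"
  define dm where "dm = d_fun eta N c2"
  have c1: "c1 \<noteq> 0" using e h by (simp add: c1_def)
  have c2: "c2 \<noteq> 0" using e h q by (simp add: c2_def)
  have am: "am \<noteq> 0" using wa h by (simp add: am_def c1_def)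
  have dm: "dm \<noteq> 0" using wd h by (simp add: dm_def c2_def)
  have c12: "c1 / c2 = q" using c1 q by (simp add: c1_def c2_def)
  have c21: "c1 / q = c2" by (simp add: c1_def c2_def)
  have eL: "covec_op N L (?T l (Suc 0) (Suc 0)) y = ev q eta N h l * L y" if "l \<noteq> 0" "y \<in> confs N" for l y
    using eigen_left[OF q e, of N h] that by (simp add: evL_N L_def)
  have eLm: "covec_op N Lm (?T l (Suc 0) (Suc 0)) y = ev q eta N ?hm l * Lm y" if "l \<noteq> 0" "y \<in> confs N" for l y
    using eigen_left[OF q e, of N ?hm] that by (simp add: evL_N Lm_def)
  have eRm: "op_vec N (?T l (Suc 0) (Suc 0)) Rm x = ev q eta N ?hm l * Rm x" if "l \<noteq> 0" "x \<in> confs N" for l x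
    using eigen_right[OF q e, of 0 ?hm] that by (simp add: evR_0 Rm_def)
  have ev0: "ev q eta N ?hm c1 = 0"
    unfolding ev_def c1_def using h e by (intro prod_zero) (auto intro!: bexI[of _ m] simp: br_one)
  have f1: "op_vec N (?T c1 0 (Suc 0)) Rm x = am * R x" for x
    using F1[OF h, of q eta] am unfolding R_def Rm_def am_def c1_def by simp
  define X where "X = pairing N (covec_op N L (?T c1 0 (Suc 0))) Rm"
  have X: "X = am * pairing N L R"
    unfolding X_def pairing_assoc f1 by (rule pairing_scal_right)
  define Y where "Y = pairing N (covec_op N L (?T c2 0 (Suc 0))) Rm"
  have QD: "QD q eta N c1" by (rule QD_all) (use q c1 e in auto)
  have f2: "\<forall>y\<in>confs N. L y = covec_op N Lm (?T c1 (Suc 0) 0) y / dm"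
    using F2[OF q e wa h(1-3)] unfolding L_def Lm_def c1_def dm_def c2_def by simp
  have Yv: "covec_op N L (?T c2 0 (Suc 0)) y = - (alpha q eta N c1 * delta eta N c2) * Lm y / dm" if y: "y \<in> confs N" for y
  proof -
    have "covec_op N L (?T c2 0 (Suc 0)) y = covec_op N (\<lambda>z. covec_op N Lm (?T c1 (Suc 0) 0) z / dm) (?T c2 0 (Suc 0)) y"
      using f2 by (intro covec_cong) auto
    also have "\<dots> = covec_op N Lm (op_mult N (?T c1 (Suc 0) 0) (?T c2 0 (Suc 0))) y / dm"
      by (simp add: covec_div covec_mult)
    also have "covec_op N Lm (op_mult N (?T c1 (Suc 0) 0) (?T c2 0 (Suc 0))) y
       = covec_op N Lm (\<lambda>x y. op_mult N (?T c1 (Suc 0) (Suc 0)) (?T c2 0 0) x y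
             - (if x = y then alpha q eta N c1 * delta eta N c2 else 0)) y"
      using QD y unfolding QD_def c21[symmetric] by (intro covec_op_cong2) auto
    also have "\<dots> = covec_op N Lm (op_mult N (?T c1 (Suc 0) (Suc 0)) (?T c2 0 0)) y
             - alpha q eta N c1 * delta eta N c2 * Lm y"
    proof -
      have "(\<Sum>x\<in>confs N. Lm x * (if x = y then alpha q eta N c1 * delta eta N c2 else 0)) = alpha q eta N c1 * delta eta N c2 * Lm y"
        using y by (simp add: if_distrib sum.delta cong: if_cong)
      thus ?thesis by (simp add: covec_op_def right_diff_distrib sum_subtractf)
    qed
    also have "covec_op N Lm (op_mult N (?T c1 (Suc 0) (Suc 0)) (?T c2 0 0)) y = 0"
    proof -
      have "covec_op N Lm (op_mult N (?T c1 (Suc 0) (Suc 0)) (?T c2 0 0)) y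
         = covec_op N (\<lambda>x. 0 * Lm x) (?T c2 0 0) y"
        unfolding covec_mult using eLm[OF c1] ev0 by (intro covec_cong) auto
      thus ?thesis by (simp add: covec_op_def)
    qed
    finally show ?thesis by simp
  qed
  have Y: "Y = - (alpha q eta N c1 * delta eta N c2) / dm * pairing N Lm Rm"
  proof -
    have "Y = pairing N (\<lambda>y. (- (alpha q eta N c1 * delta eta N c2) / dm) * Lm y) Rm"
      unfolding Y_def by (rule pairing_cong) (simp_all add: Yv)
    thus ?thesis by (simp only: pairing_scal_left)
  qed
  have R: "RTT q eta N c1 c2" using RTT_all[of q c1 c2 N eta] q c1 c2 e by auto
  have rel: "br q * pairing N (covec_op N L (op_mult N (?T c1 (Suc 0) (Suc 0)) (?T c2 0 (Suc 0)))) Rm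
     + (q - 1/q) * pairing N (covec_op N L (op_mult N (?T c1 0 (Suc 0)) (?T c2 (Suc 0) (Suc 0)))) Rm
     = br (q * q) * pairing N (covec_op N L (op_mult N (?T c2 0 (Suc 0)) (?T c1 (Suc 0) (Suc 0)))) Rm"
    by (rule lift_pair3) (use rel_DB[OF R] c12 in auto)
  have p1: "pairing N (covec_op N L (op_mult N (?T c1 (Suc 0) (Suc 0)) (?T c2 0 (Suc 0)))) Rm = ev q eta N h c1 * Y"
  proof -
    have "pairing N (covec_op N L (op_mult N (?T c1 (Suc 0) (Suc 0)) (?T c2 0 (Suc 0)))) Rm
        = pairing N (covec_op N (\<lambda>x. ev q eta N h c1 * L x) (?T c2 0 (Suc 0))) Rm"
      using eL[OF c1] by (intro pairing_cong refl) (simp add: covec_mult, intro covec_cong, auto)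
    thus ?thesis by (simp add: covec_scal_fun pairing_scal_left Y_def)
  qed
  have p2: "pairing N (covec_op N L (op_mult N (?T c1 0 (Suc 0)) (?T c2 (Suc 0) (Suc 0)))) Rm = ev q eta N ?hm c2 * X"
  proof -
    have "pairing N (covec_op N L (op_mult N (?T c1 0 (Suc 0)) (?T c2 (Suc 0) (Suc 0)))) Rm
        = pairing N (covec_op N L (?T c1 0 (Suc 0))) (op_vec N (?T c2 (Suc 0) (Suc 0)) Rm)"
      by (simp add: covec_mult pairing_assoc cong: pairing_cong)
    also have "\<dots> = pairing N (covec_op N L (?T c1 0 (Suc 0))) (\<lambda>x. ev q eta N ?hm c2 * Rm x)"
      using eRm[OF c2] by (intro pairing_cong) auto
    finally show ?thesis by (simp add: pairing_scal_right X_def)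
  qed
  have p3: "pairing N (covec_op N L (op_mult N (?T c2 0 (Suc 0)) (?T c1 (Suc 0) (Suc 0)))) Rm = 0"
  proof -
    have "pairing N (covec_op N L (op_mult N (?T c2 0 (Suc 0)) (?T c1 (Suc 0) (Suc 0)))) Rm
        = pairing N (covec_op N L (?T c2 0 (Suc 0))) (op_vec N (?T c1 (Suc 0) (Suc 0)) Rm)"
      by (simp add: covec_mult pairing_assoc cong: pairing_cong)
    also have "\<dots> = pairing N (covec_op N L (?T c2 0 (Suc 0))) (\<lambda>x. 0 * Rm x)"
      using eRm[OF c1] ev0 by (intro pairing_cong) auto
    finally show ?thesis by (simp add: pairing_def)
  qed
  have brq: "br q = q - 1/q" by (simp add: br_def)
  have key: "ev q eta N h c1 * Y = - ev q eta N ?hm c2 * X"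
  proof -
    have "(q - 1/q) * (ev q eta N h c1 * Y + ev q eta N ?hm c2 * X) = 0"
      using rel p1 p2 p3 brq by (simp add: algebra_simps)
    hence "ev q eta N h c1 * Y + ev q eta N ?hm c2 * X = 0" using q by simp
    thus ?thesis by (simp add: algebra_simps eq_neg_iff_add_eq_0)
  qed
  have Delta: "alpha q eta N c1 * delta eta N c2 = - am * dm"
    using a_alpha[OF e c1 q(1)] d_delta by (simp add: am_def dm_def)
  have "ev q eta N h c1 * (am * pairing N Lm Rm) = - ev q eta N ?hm c2 * (am * pairing N L R)"
    using key unfolding Y X Delta using dm by (simp add: field_simps)
  hence "am * (pairing N L R * ev q eta N ?hm c2 + ev q eta N h c1 * pairing N Lm Rm) = 0"
    by (simp add: algebra_simps)
  hence "pairing N L R * ev q eta N ?hm c2 + ev q eta N h c1 * pairing N Lm Rm = 0" using am by simp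
  hence "pairing N L R * ev q eta N ?hm c2 = - ev q eta N h c1 * pairing N Lm Rm"
    by (simp add: eq_neg_iff_add_eq_0)
  thus ?thesis by (simp add: L_def R_def Lm_def Rm_def left_ls right_rs c1_def c2_def)
qed


definition ge :: "complex \<Rightarrow> (nat \<Rightarrow> complex) \<Rightarrow> bool list \<Rightarrow> nat \<Rightarrow> nat \<Rightarrow> complex" where
  "ge q eta h b a = br (eta a * (if h ! b = h ! a then 1 else if h ! b then q else 1 / q) / eta b)"

definition GG :: "complex \<Rightarrow> (nat \<Rightarrow> complex) \<Rightarrow> nat \<Rightarrow> bool list \<Rightarrow> complex" where
  "GG q eta N h = (\<Prod>b<N. \<Prod>a\<in>{b<..<N}. ge q eta h b a)"

lemma decomp1:
  fixes E :: "nat \<Rightarrow> complex"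
  assumes "m < N"
  shows "(\<Prod>n<N. E n) = (\<Prod>n<m. E n) * E m * (\<Prod>n\<in>{m<..<N}. E n)"
proof -
  have "{..<N} = {..<m} \<union> ({m} \<union> {m<..<N})" using assms by auto
  moreover have "{..<m} \<inter> ({m} \<union> {m<..<N}) = {}" "{m} \<inter> {m<..<N} = {}" by auto
  ultimately show ?thesis by (simp add: prod.union_disjoint ac_simps)
qed

lemma decomp2:
  fixes f :: "nat \<Rightarrow> nat \<Rightarrow> complex"
  assumes "m < N"
  shows "(\<Prod>b<N. \<Prod>a\<in>{b<..<N}. f b a) =
    (\<Prod>p\<in>{p. fst p < snd p \<and> snd p < N \<and> fst p \<noteq> m \<and> snd p \<noteq> m}. f (fst p) (snd p))
    * (\<Prod>b<m. f b m) * (\<Prod>a\<in>{m<..<N}. f m a)"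
proof -
  define S3 where "S3 = {p. fst p < snd p \<and> snd p < N \<and> fst p \<noteq> m \<and> snd p \<noteq> m}"
  define S1 where "S1 = (\<lambda>b. (b, m)) ` {..<m}"
  define S2 where "S2 = (\<lambda>a. (m, a)) ` {m<..<N}"
  have fin: "finite S3" unfolding S3_def
    by (rule finite_subset[of _ "{..<N} \<times> {..<N}"]) auto
  have Sig: "Sigma {..<N} (\<lambda>b. {b<..<N}) = S3 \<union> (S1 \<union> S2)"
    unfolding S1_def S2_def S3_def using assms by auto
  have "(\<Prod>b<N. \<Prod>a\<in>{b<..<N}. f b a) = (\<Prod>p\<in>Sigma {..<N} (\<lambda>b. {b<..<N}). f (fst p) (snd p))"
    by (subst prod.Sigma) (auto simp: case_prod_beta)
  also have "\<dots> = (\<Prod>p\<in>S3. f (fst p) (snd p)) * ((\<Prod>p\<in>S1. f (fst p) (snd p)) * (\<Prod>p\<in>S2. f (fst p) (snd p)))"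
  proof -
    have fin1: "finite S1" "finite S2" by (simp_all add: S1_def S2_def)
    have d1: "S3 \<inter> (S1 \<union> S2) = {}" and d2: "S1 \<inter> S2 = {}" by (auto simp: S1_def S2_def S3_def)
    show ?thesis unfolding Sig prod.union_disjoint[OF fin finite_UnI[OF fin1] d1] prod.union_disjoint[OF fin1 d2] ..
  qed
  also have "(\<Prod>p\<in>S1. f (fst p) (snd p)) = (\<Prod>b<m. f b m)"
    unfolding S1_def by (subst prod.reindex) (auto simp: inj_on_def)
  also have "(\<Prod>p\<in>S2. f (fst p) (snd p)) = (\<Prod>a\<in>{m<..<N}. f m a)"
    unfolding S2_def by (subst prod.reindex) (auto simp: inj_on_def)
  finally show ?thesis by (simp add: S3_def ac_simps)
qed

lemma G_step:
  assumes q: "q \<noteq> 0" and e: "\<forall>n<N. eta n \<noteq> 0" and h: "m < N" "h ! m" and len: "length h = N"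
  shows "GG q eta N h * (- ev q eta N h (eta m)) = GG q eta N (h[m := False]) * ev q eta N (h[m := False]) (eta m / q)"
proof -
  let ?hm = "h[m := False]"
  let ?S3 = "{p. fst p < snd p \<and> snd p < N \<and> fst p \<noteq> m \<and> snd p \<noteq> m}"
  let ?E = "\<lambda>n. br (eta m / eta n * (if h ! n then q else 1))"
  let ?E' = "\<lambda>n. br (eta m / q / eta n * (if ?hm ! n then q else 1))"
  have em: "eta m \<noteq> 0" using e h by auto
  have s3: "(\<Prod>p\<in>?S3. ge q eta h (fst p) (snd p)) = (\<Prod>p\<in>?S3. ge q eta ?hm (fst p) (snd p))"
    by (intro prod.cong) (auto simp: ge_def)
  have f1: "ge q eta h b m * ?E b = ge q eta ?hm b m * ?E' b" if "b < m" for b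
  proof -
    have eb: "eta b \<noteq> 0" using e that h by auto
    show ?thesis using that h eb em q len by (cases "h ! b") (simp_all add: ge_def br_def field_simps)
  qed
  have f2: "ge q eta h m a * ?E a = ge q eta ?hm m a * ?E' a" if "a \<in> {m<..<N}" for a
  proof -
    have ea: "eta a \<noteq> 0" using e that by auto
    show ?thesis using that h ea em q len by (cases "h ! a") (simp_all add: ge_def br_def field_simps)
  qed
  have f3: "- ?E m = ?E' m" using h em q len by (simp add: br_def field_simps)
  have "GG q eta N h * (- ev q eta N h (eta m))
     = (\<Prod>p\<in>?S3. ge q eta h (fst p) (snd p)) * (\<Prod>b<m. ge q eta h b m * ?E b)
       * (\<Prod>a\<in>{m<..<N}. ge q eta h m a * ?E a) * (- ?E m)"
    unfolding GG_def ev_def decomp2[OF h(1)] decomp1[OF h(1)] prod.distrib by (simp add: ac_simps)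
  also have "\<dots> = (\<Prod>p\<in>?S3. ge q eta ?hm (fst p) (snd p)) * (\<Prod>b<m. ge q eta ?hm b m * ?E' b)
       * (\<Prod>a\<in>{m<..<N}. ge q eta ?hm m a * ?E' a) * ?E' m"
  proof -
    have p1: "(\<Prod>b<m. ge q eta h b m * ?E b) = (\<Prod>b<m. ge q eta ?hm b m * ?E' b)"
      by (rule prod.cong, rule refl, rule f1, simp)
    have p2: "(\<Prod>a\<in>{m<..<N}. ge q eta h m a * ?E a) = (\<Prod>a\<in>{m<..<N}. ge q eta ?hm m a * ?E' a)"
      by (rule prod.cong, rule refl, rule f2, simp)
    show ?thesis by (simp only: s3 p1 p2 f3)
  qed
  also have "\<dots> = GG q eta N ?hm * ev q eta N ?hm (eta m / q)"
    unfolding GG_def ev_def decomp2[OF h(1)] decomp1[OF h(1)] prod.distrib by (simp add: ac_simps)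
  finally show ?thesis .
qed


lemma ls_allF: "(\<And>j. j < k \<Longrightarrow> \<not> h ! j) \<Longrightarrow> ls q eta N h k = (\<lambda>x. ref_state N x / norm_sov eta N)"
  by (induction k) (auto simp: ls_0 ls_Suc)

lemma pairing_init: "pairing N (\<lambda>x. ref_state N x / c) (\<lambda>x. ref_state N x / c) = 1 / (c * c)"
proof -
  have "pairing N (\<lambda>x. ref_state N x / c) (\<lambda>x. ref_state N x / c)
      = (\<Sum>x\<in>confs N. if x = replicate N True then 1 / (c * c) else 0)"
    unfolding pairing_def ref_state_def by (intro sum.cong) auto
  thus ?thesis by (simp add: sum.delta)
qed

lemma GG_allF:
  assumes "\<And>j. j < N \<Longrightarrow> \<not> h ! j"
  shows "GG q eta N h = norm_sov eta N * norm_sov eta N"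
proof -
  have "norm_sov eta N * norm_sov eta N = (\<Prod>b<N. \<Prod>a\<in>{b<..<N}. (csqrt (eta a / eta b - eta b / eta a))^2)"
    unfolding norm_sov_def power2_eq_square[symmetric] prod_power_distrib ..
  also have "\<dots> = (\<Prod>b<N. \<Prod>a\<in>{b<..<N}. eta a / eta b - eta b / eta a)" by simp
  also have "\<dots> = GG q eta N h"
    unfolding GG_def ge_def br_def using assms by (intro prod.cong refl) auto
  finally show ?thesis by simp
qed

lemma ev_nz_at:
  assumes q: "q \<noteq> 0" "q - 1/q \<noteq> 0" and wn: "norm_sov eta N \<noteq> 0" and wa: "\<forall>n<N. a_fun q eta N (eta n) \<noteq> 0"
    and m: "m < N" "h ! m"
  shows "ev q eta N h (eta m) \<noteq> 0"
proof -
  have "br (eta m / eta n * (if h ! n then q else 1)) \<noteq> 0" if n: "n < N" for n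
  proof (cases "n = m")
    case True
    have "eta m \<noteq> 0" using wa m unfolding a_fun_def by auto
    thus ?thesis using True m q by (simp add: br_def)
  next
    case False
    thus ?thesis using generic_a[of q eta N m n] generic_norm[OF wn, of m n] wa m n by auto
  qed
  thus ?thesis unfolding ev_def by simp
qed

lemma card_upd:
  assumes "length h = N" "m < N" "h ! m"
  shows "card {j. j < N \<and> h[m := False] ! j} = card {j. j < N \<and> h ! j} - 1"
proof -
  have "{j. j < N \<and> h[m := False] ! j} = {j. j < N \<and> h ! j} - {m}"
    using assms by (auto simp: nth_list_update)
  thus ?thesis using assms by simp
qed

lemma norm_G:
  assumes q: "q \<noteq> 0" "q - 1/q \<noteq> 0" and e: "\<forall>n<N. eta n \<noteq> 0" and wn: "norm_sov eta N \<noteq> 0"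
    and wa: "\<forall>n<N. a_fun q eta N (eta n) \<noteq> 0" and wd: "\<forall>n<N. d_fun eta N (eta n / q) \<noteq> 0"
  shows "\<forall>h. length h = N \<longrightarrow> card {j. j < N \<and> h ! j} = c \<longrightarrow>
      pairing N (left_sov q eta N h) (right_sov q eta N h) * GG q eta N h = 1"
proof (induction c)
  case 0
  show ?case
  proof (intro allI impI)
    fix h :: "bool list" assume h: "length h = N" "card {j. j < N \<and> h ! j} = 0"
    have F: "\<not> h ! j" if "j < N" for j using h that by auto
    have L: "left_sov q eta N h = (\<lambda>x. ref_state N x / norm_sov eta N)"
      unfolding left_ls by (rule ls_allF) (use F in auto)
    have R: "right_sov q eta N h = (\<lambda>x. ref_state N x / norm_sov eta N)"
      unfolding right_rs using rs_skip[of 0 N N h q eta] F by (simp add: rs_N)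
    show "pairing N (left_sov q eta N h) (right_sov q eta N h) * GG q eta N h = 1"
      using GG_allF[OF F, where q=q and eta=eta] wn by (simp add: L R pairing_init)
  qed
next
  case (Suc c)
  show ?case
  proof (intro allI impI)
    fix h :: "bool list" assume h: "length h = N" "card {j. j < N \<and> h ! j} = Suc c"
    have "{j. j < N \<and> h ! j} \<noteq> {}"
    proof
      assume "{j. j < N \<and> h ! j} = {}"
      with h(2) show False by simp
    qed
    then obtain j0 where j0: "j0 < N" "h ! j0" by auto
    define m where "m = (LEAST j. j < N \<and> h ! j)"
    have mP: "m < N \<and> h ! m" unfolding m_def by (rule LeastI[of _ j0]) (use j0 in auto)
    have mL: "\<not> h ! j" if "j < m" for j
      using not_less_Least[OF that[unfolded m_def]] that mP by auto
    let ?hm = "h[m := False]"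
    have lhm: "length ?hm = N" using h by simp
    have chm: "card {j. j < N \<and> ?hm ! j} = c" using card_upd[OF h(1)] mP h by simp
    have IH: "pairing N (left_sov q eta N ?hm) (right_sov q eta N ?hm) * GG q eta N ?hm = 1"
      using Suc.IH lhm chm by blast
    have NS: "pairing N (left_sov q eta N h) (right_sov q eta N h) * ev q eta N ?hm (eta m / q)
       = - ev q eta N h (eta m) * pairing N (left_sov q eta N ?hm) (right_sov q eta N ?hm)"
      by (rule norm_step[OF q e wa wd h(1)]) (use mP mL in auto)
    have GS: "GG q eta N h * (- ev q eta N h (eta m)) = GG q eta N ?hm * ev q eta N ?hm (eta m / q)"
      by (rule G_step[OF q(1) e]) (use mP h in auto)
    have nz: "ev q eta N h (eta m) \<noteq> 0" by (rule ev_nz_at[OF q wn wa]) (use mP in auto)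
    define P where "P = pairing N (left_sov q eta N h) (right_sov q eta N h)"
    define Pm where "Pm = pairing N (left_sov q eta N ?hm) (right_sov q eta N ?hm)"
    have "P * GG q eta N h * (- ev q eta N h (eta m)) = GG q eta N ?hm * (P * ev q eta N ?hm (eta m / q))"
    proof -
      have "P * GG q eta N h * (- ev q eta N h (eta m)) = P * (GG q eta N h * (- ev q eta N h (eta m)))"
        by (rule mult.assoc)
      also have "\<dots> = P * (GG q eta N ?hm * ev q eta N ?hm (eta m / q))" by (simp only: GS)
      finally show ?thesis by (simp add: ac_simps)
    qed
    also have "\<dots> = - ev q eta N h (eta m) * (Pm * GG q eta N ?hm)"
      using NS unfolding P_def Pm_def by (simp add: ac_simps)
    also have "\<dots> = - ev q eta N h (eta m)" using IH unfolding Pm_def by simp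
    finally have "(P * GG q eta N h - 1) * ev q eta N h (eta m) = 0" by (simp add: algebra_simps)
    thus "pairing N (left_sov q eta N h) (right_sov q eta N h) * GG q eta N h = 1"
      using nz unfolding P_def by simp
  qed
qed

lemma ortho:
  assumes q: "q \<noteq> 0" "q - 1/q \<noteq> 0" and e: "\<forall>n<N. eta n \<noteq> 0" and wn: "norm_sov eta N \<noteq> 0"
    and wa: "\<forall>n<N. a_fun q eta N (eta n) \<noteq> 0"
    and h: "length h = N" "length h' = N" "h \<noteq> h'"
  shows "pairing N (left_sov q eta N h) (right_sov q eta N h') = 0"
proof -
  obtain m where m: "m < N" "h ! m \<noteq> h' ! m"
    using h nth_equalityI[of h h'] by auto
  have em: "eta m \<noteq> 0" using e m by auto
  have l: "eta m / q \<noteq> 0" using em q by simp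
  have zero: "ev q eta N g (eta m / q) = 0" if "g ! m" for g
    unfolding ev_def using m em q that by (intro prod_zero) (auto intro!: bexI[of _ m] simp: br_one)
  have nonz: "ev q eta N g (eta m / q) \<noteq> 0" if gm: "\<not> g ! m" for g
  proof -
    have "br (eta m / q / eta n * (if g ! n then q else 1)) \<noteq> 0" if n: "n < N" for n
    proof (cases "n = m")
      case True thus ?thesis using gm em q by (simp add: br_def field_simps)
    next
      case False
      show ?thesis
      proof (cases "g ! n")
        case True
        have "eta m / q / eta n * q = eta m / eta n" using q by simp
        thus ?thesis using True generic_norm[OF wn, of m n] m n False by simp
      next
        case gF: False
        have "eta m / q / eta n = 1 / (eta n / eta m * q)" using em by simp
        hence "br (eta m / q / eta n) = - br (eta n / eta m * q)" by (simp only: br_recip)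
        thus ?thesis using gF generic_a[of q eta N n m] wa m n by simp
      qed
    qed
    thus ?thesis unfolding ev_def by simp
  qed
  have E: "ev q eta N h (eta m / q) * pairing N (left_sov q eta N h) (right_sov q eta N h')
       = ev q eta N h' (eta m / q) * pairing N (left_sov q eta N h) (right_sov q eta N h')"
    by (rule pairing_eigen[OF q e l])
  show ?thesis
  proof (cases "h ! m")
    case True
    hence "\<not> h' ! m" using m by simp
    thus ?thesis using E zero[OF True] nonz[of h'] by simp
  next
    case False
    hence "h' ! m" using m by simp
    thus ?thesis using E zero[of h'] nonz[OF False] by simp
  qed
qed


lemma powi_bool: "q \<noteq> 0 \<Longrightarrow> (q::complex) powi (of_bool x - of_bool y) = (if x = y then 1 else if x then q else 1 / q)"
  by (cases x; cases y) (simp_all add: power_int_minus divide_inverse)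

theorem mainTheorem4:
  fixes q :: complex and eta :: "nat \<Rightarrow> complex" and N :: nat and h h' :: "bool list"
  assumes q_nz: "q \<noteq> 0" and q_not1: "q \<noteq> 1" and q_notm1: "q \<noteq> -1"
    and N_pos: "N \<ge> 1"
    and eta_nz: "\<forall>n<N. eta n \<noteq> 0"
    and eta_gen: "\<forall>a b j. a < b \<and> b < N \<and> j \<in> {-1, 0, 1::int} \<longrightarrow> eta a \<noteq> q powi j * eta b"
    and wd_norm: "norm_sov eta N \<noteq> 0"
    and wd_a: "\<forall>n<N. a_fun q eta N (eta n) \<noteq> 0"
    and wd_d: "\<forall>n<N. d_fun eta N (eta n / q) \<noteq> 0"
    and len_h: "length h = N" and len_h': "length h' = N"
  shows "pairing N (left_sov q eta N h) (right_sov q eta N h') =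
    (if h = h' then
       (\<Prod>b<N. \<Prod>a\<in>{b<..<N}.
          1 / (eta a * q powi (of_bool (h ! b) - of_bool (h ! a)) / eta b
               - eta b / (q powi (of_bool (h ! b) - of_bool (h ! a)) * eta a)))
     else 0)"
proof -
  have c: "q - 1/q \<noteq> 0"
  proof
    assume "q - 1/q = 0"
    hence "(q - 1) * (q + 1) = 0" using q_nz by (simp add: field_simps algebra_simps)
    thus False using q_not1 q_notm1 by (auto simp: add_eq_0_iff2)
  qed
  show ?thesis
  proof (cases "h = h'")
    case False
    thus ?thesis using ortho[OF q_nz c eta_nz wd_norm wd_a len_h len_h' False] by simp
  next
    case True
    have PG: "pairing N (left_sov q eta N h) (right_sov q eta N h) * GG q eta N h = 1"
      using norm_G[OF q_nz c eta_nz wd_norm wd_a wd_d, of "card {j. j < N \<and> h ! j}"] len_h by blast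
    have tm: "1 / (eta a * q powi (of_bool (h ! b) - of_bool (h ! a)) / eta b
               - eta b / (q powi (of_bool (h ! b) - of_bool (h ! a)) * eta a)) = 1 / ge q eta h b a"
      if "b < N" "a \<in> {b<..<N}" for a b
    proof -
      have ea: "eta a \<noteq> 0" and eb: "eta b \<noteq> 0" using that eta_nz by auto
      show ?thesis using ea eb q_nz
        by (simp add: powi_bool ge_def br_def field_simps)
    qed
    have "(\<Prod>b<N. \<Prod>a\<in>{b<..<N}.
          1 / (eta a * q powi (of_bool (h ! b) - of_bool (h ! a)) / eta b
               - eta b / (q powi (of_bool (h ! b) - of_bool (h ! a)) * eta a)))
       = (\<Prod>b<N. \<Prod>a\<in>{b<..<N}. 1 / ge q eta h b a)"
      using tm by (intro prod.cong refl) auto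
    also have "\<dots> = 1 / GG q eta N h"
      unfolding GG_def by (simp add: prod_dividef)
    also have "\<dots> = pairing N (left_sov q eta N h) (right_sov q eta N h)"
    proof -
      have nz: "GG q eta N h \<noteq> 0" using PG by auto
      show ?thesis using PG nz by (simp add: field_simps)
    qed
    finally show ?thesis using True by simp
  qed
qed

end
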